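(* Let $q$ be a prime power, $\pi={\rm PG}(2,q)$, $C_1$ a Singer cyclic group of ${\rm PGL}(3,q)$ and $\mathcal B$ the circumscribed bundle of $\pi$ left invariant by $C_1$. Let $\mathcal C,\mathcal C'$ be two distinct conics of $\mathcal B$ and let $g\in C_1$ with $\mathcal C'=\mathcal C^g$. If $\mathcal C\cap\mathcal C'=\{B\}$ and $A\in\mathcal C$ is the point with $A^g=B$, then $B\in PP^g$ for every point $P\in\mathcal C\setminus\{A,B\}$. In particular, the line $BB^g$ is tangent to $\mathcal C$ at $B$ and the line $BB^{g^{-1}}$ is tangent to $\mathcal C'$ at $B$.
   Context: A Singer cyclic group of ${\rm PGL}(3,q)$ is a cyclic group of order $q^2+q+1$ acting regularly on the points of ${\rm PG}(2,q)$. Embedding $\pi$ in ${\rm PG}(2,q^3)$, $C_1$ fixes a unique triangle $\Delta$ with vertices in ${\rm PG}(2,q^3)\setminus{\rm PG}(2,q)$. The circumscribed bundle $\mathcal B$ is the set of non-degenerate conics of $\pi$ whose extensions over ${\rm GF}(q^3)$ contain the three vertices of $\Delta$; it consists of $q^2+q+1$ conics, any two meeting in exactly one point, and it is invariant under $C_1$. For distinct points $X,Y$, $XY$ denotes the line joining them. *)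

theory Defs
  imports "HOL-Analysis.Analysis"
begin

definition proj_pt :: "'a::field ^ 3 \<Rightarrow> ('a ^ 3) set" where
  "proj_pt v = {c *s v | c. c \<noteq> 0}"

definition points :: "('a::field ^ 3) set set" where
  "points = {proj_pt v | v. v \<noteq> 0}"

(* X, Y, Z collinear (rank of representative vectors \<le> 2) *)
definition det3 :: "'a::comm_ring_1 ^ 3 \<Rightarrow> 'a ^ 3 \<Rightarrow> 'a ^ 3 \<Rightarrow> 'a" where
  "det3 x y z = x$1 * (y$2 * z$3 - y$3 * z$2) - x$2 * (y$1 * z$3 - y$3 * z$1)
              + x$3 * (y$1 * z$2 - y$2 * z$1)"

(* the line XY joining two points X, Y (meant for X \<noteq> Y) *)
definition pline :: "('a::field ^ 3) set \<Rightarrow> ('a ^ 3) set \<Rightarrow> ('a ^ 3) set set" where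
  "pline X Y = {P \<in> points. \<exists>x\<in>X. \<exists>y\<in>Y. \<exists>p\<in>P. det3 x y p = 0}"

definition smat :: "'a::field \<Rightarrow> 'a ^ 3 ^ 3 \<Rightarrow> 'a ^ 3 ^ 3" where
  "smat c M = (\<chi> i j. c * M $ i $ j)"

definition pcls :: "'a::field ^ 3 ^ 3 \<Rightarrow> ('a ^ 3 ^ 3) set" where
  "pcls M = {smat c M | c. c \<noteq> 0}"

definition pgl :: "('a::field ^ 3 ^ 3) set set" where
  "pgl = {pcls M | M. invertible M}"

definition pmul :: "('a::field ^ 3 ^ 3) set \<Rightarrow> ('a ^ 3 ^ 3) set \<Rightarrow> ('a ^ 3 ^ 3) set" where
  "pmul X Y = {M ** N | M N. M \<in> X \<and> N \<in> Y}"

fun ppow :: "('a::field ^ 3 ^ 3) set \<Rightarrow> nat \<Rightarrow> ('a ^ 3 ^ 3) set" where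
  "ppow X 0 = pcls (mat 1)"
| "ppow X (Suc k) = pmul X (ppow X k)"

definition mact :: "'a::field ^ 3 ^ 3 \<Rightarrow> ('a ^ 3) set \<Rightarrow> ('a ^ 3) set" where
  "mact M P = (\<lambda>v. M *v v) ` P"

definition pact :: "('a::field ^ 3 ^ 3) set \<Rightarrow> ('a ^ 3) set \<Rightarrow> ('a ^ 3) set" where
  "pact g P = (\<Union>M\<in>g. mact M P)"

definition singer :: "('a::{field,finite} ^ 3 ^ 3) set set \<Rightarrow> bool" where
  "singer C1 \<longleftrightarrow> C1 \<subseteq> pgl \<and> (\<exists>G\<in>pgl. C1 = range (ppow G))
     \<and> card C1 = CARD('a)^2 + CARD('a) + 1
     \<and> (\<forall>P\<in>points. \<forall>Q\<in>points. \<exists>!g. g \<in> C1 \<and> pact g P = Q)"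

(* Conics. A ternary quadratic form
   a x^2 + b y^2 + c z^2 + d xy + e xz + f yz is given by (a,b,c,d,e,f);
   a conic is a class of such forms modulo nonzero scalars. *)
type_synonym 'a qform = "'a \<times> 'a \<times> 'a \<times> 'a \<times> 'a \<times> 'a"

fun qf :: "'a::comm_ring_1 qform \<Rightarrow> 'a ^ 3 \<Rightarrow> 'a" where
  "qf (a, b, c, d, e, f) v = a * v$1^2 + b * v$2^2 + c * v$3^2
      + d * v$1 * v$2 + e * v$1 * v$3 + f * v$2 * v$3"

(* half-discriminant: nonzero iff the conic is non-degenerate (all characteristics) *)
fun qdisc :: "'a::comm_ring_1 qform \<Rightarrow> 'a" where
  "qdisc (a, b, c, d, e, f) = 4*a*b*c + d*e*f - a*f^2 - b*e^2 - c*d^2"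

fun qscale :: "'a::comm_ring_1 \<Rightarrow> 'a qform \<Rightarrow> 'a qform" where
  "qscale t (a, b, c, d, e, f) = (t*a, t*b, t*c, t*d, t*e, t*f)"

fun qmap :: "('a \<Rightarrow> 'b) \<Rightarrow> 'a qform \<Rightarrow> 'b qform" where
  "qmap \<phi> (a, b, c, d, e, f) = (\<phi> a, \<phi> b, \<phi> c, \<phi> d, \<phi> e, \<phi> f)"

definition ccls :: "'a::field qform \<Rightarrow> 'a qform set" where
  "ccls k = {qscale t k | t. t \<noteq> 0}"

definition conics :: "'a::field qform set set" where
  "conics = {ccls k | k. qdisc k \<noteq> 0}"

definition cpts :: "'a::field qform set \<Rightarrow> ('a ^ 3) set set" where
  "cpts K = {P \<in> points. \<forall>k\<in>K. \<forall>v\<in>P. qf k v = 0}"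

definition cimg_rel :: "('a::field ^ 3 ^ 3) set \<Rightarrow> 'a qform set \<Rightarrow> 'a qform set \<Rightarrow> bool" where
  "cimg_rel g K K' \<longleftrightarrow> (\<exists>M\<in>g. \<exists>k\<in>K. \<exists>k'\<in>K'. \<forall>v. qf k' (M *v v) = qf k v)"

definition field_emb :: "('a::field \<Rightarrow> 'b::field) \<Rightarrow> bool" where
  "field_emb \<phi> \<longleftrightarrow> (\<forall>x y. \<phi> (x + y) = \<phi> x + \<phi> y) \<and> (\<forall>x y. \<phi> (x * y) = \<phi> x * \<phi> y)
                   \<and> \<phi> 1 = 1"

definition vmap :: "('a \<Rightarrow> 'b) \<Rightarrow> 'a ^ 3 \<Rightarrow> 'b ^ 3" where
  "vmap \<phi> v = (\<chi> i. \<phi> (v $ i))"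

definition mmap :: "('a \<Rightarrow> 'b) \<Rightarrow> 'a ^ 3 ^ 3 \<Rightarrow> 'b ^ 3 ^ 3" where
  "mmap \<phi> M = (\<chi> i j. \<phi> (M $ i $ j))"

definition sub_points :: "('a::field \<Rightarrow> 'b::field) \<Rightarrow> ('b ^ 3) set set" where
  "sub_points \<phi> = {proj_pt (vmap \<phi> v) | v. v \<noteq> 0}"

definition delta :: "('a::field \<Rightarrow> 'b::field) \<Rightarrow> ('a ^ 3 ^ 3) set set \<Rightarrow> ('b ^ 3) set set" where
  "delta \<phi> C1 = {D \<in> points. D \<notin> sub_points \<phi> \<and> (\<forall>g\<in>C1. \<forall>M\<in>g. mact (mmap \<phi> M) D = D)}"

definition circ_bundle :: "('a::field \<Rightarrow> 'b::field) \<Rightarrow> ('a ^ 3 ^ 3) set set \<Rightarrow> 'a qform set set" where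
  "circ_bundle \<phi> C1 = {K \<in> conics. \<forall>D\<in>delta \<phi> C1. \<forall>k\<in>K. \<forall>w\<in>D. qf (qmap \<phi> k) w = 0}"

definition tangent_at :: "('a::field ^ 3) set set \<Rightarrow> 'a qform set \<Rightarrow> ('a ^ 3) set \<Rightarrow> bool" where
  "tangent_at l K B \<longleftrightarrow> B \<in> cpts K \<and> l \<inter> cpts K = {B}"

end

theory Submission
  imports Defs "HOL-Computational_Algebra.Polynomial"
begin

lemma times_vec_nth [simp]: "((x::'a::times^'n) * y) $ i = x$i * y$i"
  by (simp add: times_vec_def)

definition vinv :: "'a::field ^ 3 \<Rightarrow> 'a ^ 3" where
  "vinv x = (\<chi> i. inverse (x$i))"

lemma vinv_nth [simp]: "vinv x $ i = inverse (x$i)"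
  by (simp add: vinv_def)

definition dot3 :: "'a::comm_ring_1 ^ 3 \<Rightarrow> 'a ^ 3 \<Rightarrow> 'a" where
  "dot3 l x = l$1 * x$1 + l$2 * x$2 + l$3 * x$3"

definition vlin :: "'a::comm_ring_1 ^ 3 \<Rightarrow> 'a ^ 3 \<Rightarrow> 'a ^ 3 \<Rightarrow> 'a ^ 3 \<Rightarrow> 'a ^ 3" where
  "vlin e1 e2 e3 x = x$1 *s e1 + x$2 *s e2 + x$3 *s e3"

definition pol :: "'a::comm_ring_1 qform \<Rightarrow> 'a ^ 3 \<Rightarrow> 'a ^ 3 \<Rightarrow> 'a" where
  "pol k u v = qf k (u + v) - qf k u - qf k v"

lemma det3_lin:
  "det3 (vlin e1 e2 e3 x) (vlin e1 e2 e3 y) (vlin e1 e2 e3 z) = det3 x y z * det3 e1 e2 e3"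
  unfolding vlin_def det3_def by (simp add: algebra_simps)

lemma det3_scale_cols:
  "det3 (s * x) (s * y) (s * z) = s$1 * s$2 * s$3 * det3 x y z"
  unfolding det3_def by (simp add: algebra_simps)

lemma det3_smult:
  "det3 (a *s x) (b *s y) (c *s z) = a * b * c * det3 x y z"
  unfolding det3_def by (simp add: algebra_simps)

lemma det3_adj_id:
  "det3 u v w * l$1 = dot3 l u * (v$2* w$3 - v$3* w$2) + dot3 l v * (w$2* u$3 - w$3* u$2) + dot3 l w * (u$2* v$3 - u$3* v$2)"
  "det3 u v w * l$2 = dot3 l u * (v$3* w$1 - v$1* w$3) + dot3 l v * (w$3* u$1 - w$1* u$3) + dot3 l w * (u$3* v$1 - u$1* v$3)"
  "det3 u v w * l$3 = dot3 l u * (v$1* w$2 - v$2* w$1) + dot3 l v * (w$1* u$2 - w$2* u$1) + dot3 l w * (u$1* v$2 - u$2* v$1)"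
  unfolding det3_def dot3_def by (simp_all add: algebra_simps)

lemma det3_adj:
  fixes l :: "'a::idom ^ 3"
  assumes "l \<noteq> 0" "dot3 l u = 0" "dot3 l v = 0" "dot3 l w = 0"
  shows "det3 u v w = 0"
proof -
  have "det3 u v w * l$i = 0" for i
    using assms det3_adj_id[of u v w l] exhaust_3[of i] by auto
  moreover obtain i where "l$i \<noteq> 0" using assms(1) by (auto simp: vec_eq_iff)
  ultimately show ?thesis by (metis mult_eq_0_iff)
qed

lemma qf_lin:
  "qf k (vlin e1 e2 e3 x) = (x$1)^2 * qf k e1 + (x$2)^2 * qf k e2 + (x$3)^2 * qf k e3
     + x$1 * x$2 * pol k e1 e2 + x$1 * x$3 * pol k e1 e3 + x$2 * x$3 * pol k e2 e3"
  by (cases k) (simp add: vlin_def pol_def algebra_simps power2_eq_square)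

lemma scalar_T:
  fixes n1 n2 n3 t1 t2 t3 :: "'a::field"
  assumes d: "n1 \<noteq> n2" "n2 \<noteq> n3" "n1 \<noteq> n3"
    and D1: "(n2*t3 - n3*t2) - (n1*t3 - n3*t1) + (n1*t2 - n2*t1) = 0"
    and D2: "t1*(n2*t2 - n3*t3) - t2*(n1*t1 - n3*t3) + t3*(n1*t1 - n2*t2) = 0"
  shows "t1 = t2 \<and> t2 = t3"
proof -
  define b where "b = (t1 - t2) / (n1 - n2)"
  define a where "a = t1 - b * n1"
  have h1: "t1 = a + b * n1" by (simp add: a_def)
  have "b * (n1 - n2) = t1 - t2" using d by (simp add: b_def)
  then have h2: "t2 = a + b * n2" by (simp add: a_def algebra_simps)
  have "(n2 - n1) * (t3 - a - b * n3) = 0"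
    using D1 unfolding h1 h2 by (simp add: algebra_simps)
  then have "t3 - a - b * n3 = 0" using d by simp
  then have h3: "t3 = a + b * n3" by (simp add: algebra_simps)
  have "b * b * ((n1 - n2) * (n2 - n3) * (n3 - n1)) = 0"
    using D2 unfolding h1 h2 h3 by (simp add: algebra_simps)
  then have "b = 0" using d by simp
  then show ?thesis using h1 h2 h3 by simp
qed

lemma mv_nth: "(M *v v)$i = M$i$1 * v$1 + M$i$2 * v$2 + M$i$3 * v$3" for M :: "'a::semiring_1^3^3"
  by (simp add: matrix_vector_mult_def sum_3)

lemma mv_smult: "M *v (c *s v) = c *s (M *v v)" for M :: "'a::comm_ring_1^3^3"
  by (simp add: vec_eq_iff mv_nth algebra_simps)

lemma mv_add: "M *v (u + v) = M *v u + M *v v" for M :: "'a::comm_ring_1^3^3"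
  by (simp add: vec_eq_iff mv_nth algebra_simps)

lemma mv_zero: "M *v 0 = 0" for M :: "'a::comm_ring_1^3^3"
  by (simp add: vec_eq_iff mv_nth)

definition veval :: "'a::comm_ring_1^3^3 \<Rightarrow> 'a poly \<Rightarrow> 'a^3 \<Rightarrow> 'a^3" where
  "veval N p w = foldr (\<lambda>a u. a *s w + N *v u) (coeffs p) 0"

lemma veval_pCons: "veval N (pCons a p) w = a *s w + N *v veval N p w"
  by (cases "p = 0 \<and> a = 0") (auto simp: veval_def cCons_def mv_zero)

lemma veval_0 [simp]: "veval N 0 w = 0"
  by (simp add: veval_def)

lemma veval_add: "veval N (p + q) w = veval N p w + veval N q w"
  by (induct p q rule: poly_induct2) (simp_all add: veval_pCons mv_add algebra_simps)

lemma veval_smult: "veval N (smult c p) w = c *s veval N p w"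
  by (induct p) (simp_all add: veval_pCons mv_smult mv_zero algebra_simps)

lemma veval_diff: "veval N (p - q) w = veval N p w - veval N q w"
proof -
  have "p - q = p + smult (-1) q" by simp
  then have "veval N (p - q) w = veval N p w + (-1) *s veval N q w"
    by (simp only: veval_add veval_smult)
  then show ?thesis by (simp add: vec_eq_iff)
qed

lemma veval_w0: "veval N p 0 = 0"
  by (induct p) (simp_all add: veval_pCons mv_zero)

lemma veval_mult: "veval N (p * q) w = veval N p (veval N q w)"
proof (induct p)
  case 0 then show ?case by simp
next
  case (pCons a p)
  then show ?case by (simp add: veval_pCons veval_add veval_smult)
qed

fun mpow :: "'a::semiring_1^'n^'n \<Rightarrow> nat \<Rightarrow> 'a^'n^'n" where
  "mpow A 0 = mat 1"
| "mpow A (Suc n) = A ** mpow A n"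

lemma veval_monom: "veval N (monom 1 n) w = mpow N n *v w"
  by (induct n) (simp_all add: monom_0 monom_Suc veval_pCons mv_zero matrix_vector_mul_assoc)

definition ctr :: "'a::comm_ring_1^3^3 \<Rightarrow> 'a" where
  "ctr N = N$1$1 + N$2$2 + N$3$3"
definition cc2 :: "'a::comm_ring_1^3^3 \<Rightarrow> 'a" where
  "cc2 N = N$1$1 * N$2$2 - N$1$2 * N$2$1 + N$1$1 * N$3$3 - N$1$3 * N$3$1 + N$2$2 * N$3$3 - N$2$3 * N$3$2"
definition charp :: "'a::comm_ring_1^3^3 \<Rightarrow> 'a poly" where
  "charp N = pCons (- det N) (pCons (cc2 N) (pCons (- ctr N) (pCons 1 0)))"

lemma CH: "veval N (charp N) w = 0"
  unfolding charp_def veval_pCons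
  by (simp add: vec_eq_iff forall_3 mv_nth det_3 ctr_def cc2_def algebra_simps)

lemma fermat_field:
  fixes x :: "'c::{field,finite}"
  shows "x ^ CARD('c) = x"
proof (cases "x = 0")
  case True
  have "CARD('c) > 0" by simp
  then show ?thesis using True by (simp add: power_0_left)
next
  case False
  let ?U = "UNIV - {0::'c}"
  have bij: "bij_betw (\<lambda>y. x * y) ?U ?U"
    unfolding bij_betw_def
  proof
    show "inj_on (\<lambda>y. x * y) ?U" using False by (simp add: inj_on_def)
    show "(\<lambda>y. x * y) ` ?U = ?U"
    proof
      show "(\<lambda>y. x * y) ` ?U \<subseteq> ?U" using False by auto
      show "?U \<subseteq> (\<lambda>y. x * y) ` ?U"
      proof
        fix z assume z: "z \<in> ?U"
        have "z = x * (inverse x * z)" using False by simp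
        moreover have "inverse x * z \<in> ?U" using False z by simp
        ultimately show "z \<in> (\<lambda>y. x * y) ` ?U" by blast
      qed
    qed
  qed
  have "prod (\<lambda>y. y) ?U = prod (\<lambda>y. x * y) ?U"
    using prod.reindex_bij_betw[OF bij, of "\<lambda>y. y"] by simp
  also have "\<dots> = x ^ card ?U * prod (\<lambda>y. y) ?U"
    by (simp add: prod.distrib)
  finally have eq: "1 * prod (\<lambda>y. y) ?U = x ^ card ?U * prod (\<lambda>y. y) ?U" by simp
  have nz: "prod (\<lambda>y. y) ?U \<noteq> 0" by (simp add: prod_zero_iff)
  have xc: "x ^ card ?U = 1" using mult_right_cancel[OF nz] eq by metis
  have c: "card ?U = CARD('c) - 1" by (simp add: card_Diff_singleton)
  have "CARD('c) = Suc (CARD('c) - 1)" by simp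
  then have "x ^ CARD('c) = x * x ^ card ?U" using c by (metis power_Suc)
  then show ?thesis using xc by simp
qed

lemma kernel_lemma:
  fixes A :: "'a::{field,finite}^'n^'n"
  assumes "det A = 0"
  shows "\<exists>x. x \<noteq> 0 \<and> A *v x = 0"
proof -
  have "\<not> invertible A" using assms invertible_det_nz by blast
  then have "\<not> bij ((*v) A)" using invertible_eq_bij by blast
  then have "\<not> inj ((*v) A)" using finite_UNIV_inj_surj[of "(*v) A"] bij_def by auto
  then obtain x y where "x \<noteq> y" "A *v x = A *v y" unfolding inj_def by blast
  then show ?thesis
    by (intro exI[of _ "x - y"]) (simp add: matrix_vector_mult_diff_distrib)
qed

lemma det_nz_inj:
  fixes A :: "'a::field^'n^'n"
  assumes "det A \<noteq> 0" "A *v x = 0"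
  shows "x = 0"
proof -
  have "invertible A" using assms invertible_det_nz by blast
  then have "inj ((*v) A)" using invertible_eq_bij bij_def by blast
  moreover have "A *v x = A *v 0" using assms by simp
  ultimately show ?thesis by (meson injD)
qed

lemma det3_lincomb:
  "det3 (a *s u + b *s v + c *s w) v w = a * det3 u v w"
  "det3 u (a *s u + b *s v + c *s w) w = b * det3 u v w"
  "det3 u v (a *s u + b *s v + c *s w) = c * det3 u v w"
  unfolding det3_def by (simp_all add: algebra_simps)

lemma det3_zero: "det3 0 v w = 0" "det3 u 0 w = 0" "det3 u v 0 = 0"
  unfolding det3_def by simp_all

lemma indep3:
  fixes u v w :: "'a::idom^3"
  assumes "det3 u v w \<noteq> 0" "a *s u + b *s v + c *s w = 0"
  shows "a = 0 \<and> b = 0 \<and> c = 0"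
  using det3_lincomb[where a=a and b=b and c=c and u=u and v=v and w=w] assms det3_zero by (metis mult_eq_0_iff)

lemma det3_kernel:
  fixes u v w :: "'a::{field,finite}^3"
  assumes "det3 u v w = 0"
  shows "\<exists>a b c. (a \<noteq> 0 \<or> b \<noteq> 0 \<or> c \<noteq> 0) \<and> a *s u + b *s v + c *s w = 0"
proof -
  define A :: "'a^3^3" where "A = (\<chi> i j. if j = 1 then u$i else if j = 2 then v$i else w$i)"
  have "det A = det3 u v w" unfolding A_def det_3 det3_def by (simp add: algebra_simps)
  then obtain x where x: "x \<noteq> 0" "A *v x = 0" using kernel_lemma assms by metis
  have "x$1 *s u + x$2 *s v + x$3 *s w = A *v x"
    by (simp add: vec_eq_iff mv_nth A_def algebra_simps)
  then show ?thesis using x by (intro exI[of _ "x$1"] exI[of _ "x$2"] exI[of _ "x$3"])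
      (auto simp: vec_eq_iff forall_3)
qed

lemma det_charp: "det (\<chi> i j. N$i$j - (if i = j then \<mu> else 0)) = - poly (charp N) \<mu>"
  unfolding charp_def det_3 ctr_def cc2_def by (simp add: algebra_simps)

lemma eigen_of_root:
  fixes N :: "'b::{field,finite}^3^3"
  assumes "poly (charp N) \<mu> = 0"
  shows "\<exists>e. e \<noteq> 0 \<and> N *v e = \<mu> *s e"
proof -
  define A :: "'b^3^3" where "A = (\<chi> i j. N$i$j - (if i = j then \<mu> else 0))"
  have "det A = 0" using assms det_charp[of N \<mu>] by (simp add: A_def)
  then obtain e where e: "e \<noteq> 0" "A *v e = 0" using kernel_lemma by blast
  have "A *v e = N *v e - \<mu> *s e"
    by (simp add: vec_eq_iff forall_3 mv_nth A_def algebra_simps)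
  then show ?thesis using e by (intro exI[of _ e]) simp
qed

lemma ex_three:
  assumes "finite R" "3 \<le> card R"
  shows "\<exists>a b c. a \<in> R \<and> b \<in> R \<and> c \<in> R \<and> a \<noteq> b \<and> b \<noteq> c \<and> a \<noteq> c"
proof -
  have "Suc 2 \<le> card R" using assms by simp
  then obtain a R1 where R1: "R = insert a R1" "a \<notin> R1" "Suc 1 \<le> card R1" "finite R1"
    using card_le_Suc_iff[of 2 R] by auto
  then obtain b R2 where R2: "R1 = insert b R2" "b \<notin> R2" "Suc 0 \<le> card R2" "finite R2"
    using card_le_Suc_iff[of 1 R1] by auto
  then obtain c R3 where R3: "R2 = insert c R3" "c \<notin> R3"
    using card_le_Suc_iff[of 0 R2] by auto
  have "a \<in> R" "b \<in> R" "c \<in> R" "a \<noteq> b" "b \<noteq> c" "a \<noteq> c"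
    using R1(1,2) R2(1,2) R3(1,2) by auto
  then show ?thesis by blast
qed

lemma three_roots:
  fixes N :: "'b::{field,finite}^3^3"
  assumes Q: "mpow N CARD('b) = N" and w0: "det3 w0 (N *v w0) (N *v (N *v w0)) \<noteq> 0"
    and Q3: "CARD('b) \<ge> 3"
  shows "3 \<le> card {\<mu>. poly (charp N) \<mu> = 0}"
proof -
  let ?Q = "CARD('b)"
  define f :: "'b poly" where "f = monom 1 ?Q - monom 1 1"
  define ch where "ch = charp N"
  have fN: "veval N f w = 0" for w
    by (simp add: f_def veval_diff veval_monom Q)
  have degch: "degree ch = 3" by (simp add: ch_def charp_def)
  have ch0: "ch \<noteq> 0" using degch by auto
  define r where "r = f mod ch"
  define s where "s = f div ch"
  have fsr: "f = s * ch + r" by (simp add: r_def s_def)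
  have vr: "veval N r w = 0" for w
  proof -
    have "veval N f w = veval N s (veval N ch w) + veval N r w"
      by (subst fsr) (simp add: veval_add veval_mult)
    then show ?thesis using fN[of w] by (simp add: ch_def CH veval_w0)
  qed
  have degr: "degree r \<le> 2" using degree_mod_less[OF ch0, of f] degch by (auto simp: r_def)
  have rexp: "r = pCons (coeff r 0) (pCons (coeff r 1) (pCons (coeff r 2) 0))"
  proof (subst poly_eq_iff, intro allI)
    fix n
    show "coeff r n = coeff (pCons (coeff r 0) (pCons (coeff r 1) (pCons (coeff r 2) 0))) n"
      using degr by (cases n; cases "n - 1"; cases "n - 2") (auto simp: coeff_pCons numeral_2_eq_2 intro!: coeff_eq_0)
  qed
  have "veval N r w0 = coeff r 0 *s w0 + coeff r 1 *s (N *v w0) + coeff r 2 *s (N *v (N *v w0))"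
    by (subst rexp) (simp add: veval_pCons mv_add mv_smult mv_zero algebra_simps)
  then have "coeff r 0 = 0 \<and> coeff r 1 = 0 \<and> coeff r 2 = 0"
    using vr[of w0] indep3[OF w0] by simp
  then have "r = 0" using rexp by simp
  then have fs: "f = s * ch" using fsr by simp
  have cf: "coeff f ?Q = 1" using Q3 by (simp add: f_def coeff_monom)
  have degf: "degree f = ?Q"
  proof (rule antisym)
    show "degree f \<le> ?Q" unfolding f_def
      by (rule degree_le) (auto simp: coeff_monom)
    show "?Q \<le> degree f" using cf by (intro le_degree) simp
  qed
  have s0: "s \<noteq> 0" using fs cf by auto
  have degs: "degree s + 3 = ?Q" using degree_mult_eq[OF s0 ch0] degch degf fs by simp
  have rootsf: "poly f \<beta> = 0" for \<beta>
    by (simp add: f_def poly_monom fermat_field)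
  define R where "R = {\<mu>. poly ch \<mu> = 0}"
  have "UNIV - R \<subseteq> {\<beta>. poly s \<beta> = 0}"
    using rootsf fs by (auto simp: R_def)
  then have "card (UNIV - R) \<le> card {\<beta>. poly s \<beta> = 0}" by (intro card_mono) auto
  also have "\<dots> \<le> degree s" using card_poly_roots_bound[OF s0] .
  finally have "card (UNIV - R) \<le> ?Q - 3" using degs by simp
  moreover have "card (UNIV - R) = ?Q - card R" by (simp add: card_Diff_subset)
  moreover have "card R \<le> ?Q" by (simp add: card_mono)
  ultimately have "3 \<le> card R" using Q3 by linarith
  then show ?thesis by (simp add: R_def ch_def)
qed

lemma three_eigen:
  fixes N :: "'b::{field,finite}^3^3"
  assumes Q: "mpow N CARD('b) = N" and w0: "det3 w0 (N *v w0) (N *v (N *v w0)) \<noteq> 0"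
    and Q3: "CARD('b) \<ge> 3"
  shows "\<exists>m1 m2 m3 e1 e2 e3. m1 \<noteq> m2 \<and> m2 \<noteq> m3 \<and> m1 \<noteq> m3 \<and> e1 \<noteq> 0 \<and> e2 \<noteq> 0 \<and> e3 \<noteq> 0
     \<and> N *v e1 = m1 *s e1 \<and> N *v e2 = m2 *s e2 \<and> N *v e3 = m3 *s e3"
proof -
  obtain m1 m2 m3 where m: "poly (charp N) m1 = 0" "poly (charp N) m2 = 0" "poly (charp N) m3 = 0"
    "m1 \<noteq> m2" "m2 \<noteq> m3" "m1 \<noteq> m3"
    using ex_three[OF _ three_roots[OF Q w0 Q3]] by auto
  then show ?thesis using eigen_of_root[OF m(1)] eigen_of_root[OF m(2)] eigen_of_root[OF m(3)]
    by blast
qed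

section \<open>Field embedding\<close>

lemma fe_add: "field_emb \<phi> \<Longrightarrow> \<phi> (x + y) = \<phi> x + \<phi> y" by (simp add: field_emb_def)
lemma fe_mult: "field_emb \<phi> \<Longrightarrow> \<phi> (x * y) = \<phi> x * \<phi> y" by (simp add: field_emb_def)
lemma fe_1: "field_emb \<phi> \<Longrightarrow> \<phi> 1 = 1" by (simp add: field_emb_def)
lemma fe_0: "field_emb \<phi> \<Longrightarrow> \<phi> 0 = 0"
proof -
  assume "field_emb \<phi>"
  then have "\<phi> (0 + 0) = \<phi> 0 + \<phi> 0" by (rule fe_add)
  then have "\<phi> 0 + \<phi> 0 = \<phi> 0 + 0" by simp
  then show ?thesis by (simp only: add_left_cancel)
qed
lemma fe_uminus: "field_emb \<phi> \<Longrightarrow> \<phi> (- x) = - \<phi> x"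
proof -
  assume a: "field_emb \<phi>"
  then have "\<phi> (x + - x) = \<phi> x + \<phi> (- x)" by (rule fe_add)
  then have "\<phi> x + \<phi> (- x) = 0" using fe_0[OF a] by simp
  then show ?thesis by (metis neg_eq_iff_add_eq_0)
qed
lemma fe_diff: "field_emb \<phi> \<Longrightarrow> \<phi> (x - y) = \<phi> x - \<phi> y"
  using fe_add[of \<phi> x "- y"] fe_uminus[of \<phi> y] by simp
lemma fe_power: "field_emb \<phi> \<Longrightarrow> \<phi> (x ^ n) = \<phi> x ^ n"
  by (induct n) (simp_all add: fe_1 fe_mult)
lemma fe_eq0:
  fixes \<phi> :: "'a::field \<Rightarrow> 'b::field"
  assumes "field_emb \<phi>" shows "\<phi> x = 0 \<longleftrightarrow> x = 0"
proof
  assume h: "\<phi> x = 0"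
  show "x = 0"
  proof (rule ccontr)
    assume "x \<noteq> 0"
    then have "\<phi> (x * inverse x) = 1" using fe_1[OF assms] by simp
    then show False using h fe_mult[OF assms] by simp
  qed
qed (simp add: fe_0[OF assms])
lemma fe_inj:
  fixes \<phi> :: "'a::field \<Rightarrow> 'b::field"
  assumes "field_emb \<phi>" shows "\<phi> x = \<phi> y \<longleftrightarrow> x = y"
  using fe_eq0[OF assms, of "x - y"] fe_diff[OF assms, of x y] by auto
lemma fe_inverse:
  fixes \<phi> :: "'a::field \<Rightarrow> 'b::field"
  assumes "field_emb \<phi>" shows "\<phi> (inverse x) = inverse (\<phi> x)"
proof (cases "x = 0")
  case True then show ?thesis by (simp add: fe_0[OF assms])
next
  case False
  then have "\<phi> x * \<phi> (inverse x) = 1" using fe_mult[OF assms, of x "inverse x", symmetric] fe_1[OF assms] by simp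
  then show ?thesis by (rule inverse_unique[symmetric])
qed
lemma fe_divide:
  fixes \<phi> :: "'a::field \<Rightarrow> 'b::field"
  assumes "field_emb \<phi>" shows "\<phi> (x / y) = \<phi> x / \<phi> y"
  by (simp add: divide_inverse fe_mult[OF assms] fe_inverse[OF assms])

lemmas fe_simps = fe_add fe_mult fe_1 fe_0 fe_uminus fe_diff fe_power

lemma vmap_nth [simp]: "vmap \<phi> v $ i = \<phi> (v $ i)" by (simp add: vmap_def)
lemma mmap_nth [simp]: "mmap \<phi> M $ i $ j = \<phi> (M $ i $ j)" by (simp add: mmap_def)

lemma vmap_mv: "field_emb \<phi> \<Longrightarrow> vmap \<phi> (M *v v) = mmap \<phi> M *v vmap \<phi> v"
  for M :: "'a::field^3^3"
  by (simp add: vec_eq_iff mv_nth fe_simps)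
lemma vmap_smult: "field_emb \<phi> \<Longrightarrow> vmap \<phi> (c *s v) = \<phi> c *s vmap \<phi> v"
  by (simp add: vec_eq_iff fe_simps)
lemma vmap_add: "field_emb \<phi> \<Longrightarrow> vmap \<phi> (u + v) = vmap \<phi> u + vmap \<phi> v"
  by (simp add: vec_eq_iff fe_simps)
lemma vmap_zero: "field_emb \<phi> \<Longrightarrow> vmap \<phi> 0 = 0"
  by (simp add: vec_eq_iff fe_simps)
lemma vmap_eq0:
  fixes \<phi> :: "'a::field \<Rightarrow> 'b::field"
  shows "field_emb \<phi> \<Longrightarrow> vmap \<phi> v = 0 \<longleftrightarrow> v = 0"
  by (simp add: vec_eq_iff fe_eq0)
lemma vmap_inj:
  fixes \<phi> :: "'a::field \<Rightarrow> 'b::field"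
  shows "field_emb \<phi> \<Longrightarrow> vmap \<phi> u = vmap \<phi> v \<longleftrightarrow> u = v"
  by (simp add: vec_eq_iff fe_inj)

lemma mm_nth: "(A ** B) $ i $ j = A$i$1 * B$1$j + A$i$2 * B$2$j + A$i$3 * B$3$j"
  for A :: "'a::semiring_1^3^3"
  by (simp add: matrix_matrix_mult_def sum_3)

lemma mmap_mm: "field_emb \<phi> \<Longrightarrow> mmap \<phi> (A ** B) = mmap \<phi> A ** mmap \<phi> B"
  for A :: "'a::field^3^3"
  by (simp add: vec_eq_iff mm_nth fe_simps)
lemma mmap_mat1: "field_emb \<phi> \<Longrightarrow> mmap \<phi> (mat 1) = mat 1"
  by (simp add: vec_eq_iff mat_def fe_simps)
lemma mmap_mpow: "field_emb \<phi> \<Longrightarrow> mmap \<phi> (mpow A n) = mpow (mmap \<phi> A) n"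
  for A :: "'a::field^3^3"
  by (induct n) (simp_all add: mmap_mat1 mmap_mm)

lemma fe_det3: "field_emb \<phi> \<Longrightarrow> \<phi> (det3 x y z) = det3 (vmap \<phi> x) (vmap \<phi> y) (vmap \<phi> z)"
  by (simp add: det3_def fe_simps)

lemma fe_qf: "field_emb \<phi> \<Longrightarrow> \<phi> (qf k v) = qf (qmap \<phi> k) (vmap \<phi> v)"
  by (cases k) (simp add: fe_simps)

section \<open>Projective basics\<close>

lemma proj_mem: "x \<in> proj_pt v \<longleftrightarrow> (\<exists>c. c \<noteq> 0 \<and> x = c *s v)"
  by (auto simp: proj_pt_def)
lemma proj_self: "v \<in> proj_pt v"
  unfolding proj_mem by (intro exI[of _ 1]) simp
lemma proj_smult: "c \<noteq> 0 \<Longrightarrow> proj_pt (c *s v) = proj_pt v"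
  for c :: "'a::field"
proof -
  assume c: "c \<noteq> 0"
  show ?thesis
  proof (rule set_eqI)
    fix x
    show "x \<in> proj_pt (c *s v) \<longleftrightarrow> x \<in> proj_pt v"
      unfolding proj_mem
    proof
      assume "\<exists>d. d \<noteq> 0 \<and> x = d *s (c *s v)"
      then obtain d where "d \<noteq> 0" "x = d *s (c *s v)" by blast
      then show "\<exists>d. d \<noteq> 0 \<and> x = d *s v" using c by (intro exI[of _ "d * c"]) simp
    next
      assume "\<exists>d. d \<noteq> 0 \<and> x = d *s v"
      then obtain d where "d \<noteq> 0" "x = d *s v" by blast
      then show "\<exists>d. d \<noteq> 0 \<and> x = d *s (c *s v)" using c
        by (intro exI[of _ "d / c"]) (simp add: vec_eq_iff)
    qed
  qed
qed
lemma proj_eq: "proj_pt u = proj_pt v \<longleftrightarrow> (\<exists>c. c \<noteq> 0 \<and> u = c *s v)"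
  for u :: "'a::field^3"
  by (metis proj_self proj_mem proj_smult)

lemma points_E: "P \<in> points \<Longrightarrow> \<exists>v. v \<noteq> 0 \<and> P = proj_pt v"
  by (auto simp: points_def)
lemma proj_points: "v \<noteq> 0 \<Longrightarrow> proj_pt v \<in> points"
  by (auto simp: points_def)

lemma mact_proj: "mact M (proj_pt v) = proj_pt (M *v v)" for M :: "'a::field^3^3"
proof (rule set_eqI)
  fix x
  show "x \<in> mact M (proj_pt v) \<longleftrightarrow> x \<in> proj_pt (M *v v)"
  proof
    assume "x \<in> mact M (proj_pt v)"
    then obtain c where "c \<noteq> 0" "x = M *v (c *s v)" by (auto simp: mact_def proj_pt_def)
    then show "x \<in> proj_pt (M *v v)" by (auto simp: proj_mem mv_smult)
  next
    assume "x \<in> proj_pt (M *v v)"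
    then obtain c where c: "c \<noteq> 0" "x = c *s (M *v v)" by (auto simp: proj_mem)
    then have "x = M *v (c *s v)" by (simp add: mv_smult)
    moreover have "c *s v \<in> proj_pt v" using c by (auto simp: proj_mem)
    ultimately show "x \<in> mact M (proj_pt v)" by (auto simp: mact_def)
  qed
qed

lemma pcls_mem: "N \<in> pcls M \<longleftrightarrow> (\<exists>c. c \<noteq> 0 \<and> N = smat c M)"
  by (auto simp: pcls_def)
lemma smat_mv: "smat c M *v v = c *s (M *v v)" for M :: "'a::field^3^3"
  by (simp add: vec_eq_iff mv_nth smat_def algebra_simps)
lemma smat_smat: "smat a (smat b M) = smat (a * b) M"
  by (simp add: smat_def vec_eq_iff)
lemma smat_1: "smat 1 M = M"
  by (simp add: smat_def vec_eq_iff)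
lemma pcls_self: "M \<in> pcls M"
  unfolding pcls_mem by (intro exI[of _ 1]) (simp add: smat_1)
lemma pcls_of_mem: "N \<in> pcls M \<Longrightarrow> pcls N = pcls M"
  for M :: "'a::field^3^3"
proof -
  assume "N \<in> pcls M"
  then obtain c where c: "c \<noteq> 0" "N = smat c M" by (auto simp: pcls_mem)
  show ?thesis
  proof (rule set_eqI)
    fix X
    show "X \<in> pcls N \<longleftrightarrow> X \<in> pcls M"
    proof
      assume "X \<in> pcls N"
      then obtain d where "d \<noteq> 0" "X = smat (d * c) M" by (auto simp: pcls_mem c smat_smat)
      then show "X \<in> pcls M" using c(1) unfolding pcls_mem by (intro exI[of _ "d * c"]) simp
    next
      assume "X \<in> pcls M"
      then obtain d where d: "d \<noteq> 0" "X = smat d M" by (auto simp: pcls_mem)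
      then have "X = smat (d / c) N" using c by (simp add: smat_smat)
      then show "X \<in> pcls N" using c(1) d(1) unfolding pcls_mem by (intro exI[of _ "d / c"]) simp
    qed
  qed
qed

lemma pact_pcls: "pact (pcls M) (proj_pt v) = proj_pt (M *v v)"
  for M :: "'a::field^3^3"
proof -
  have eq: "mact N (proj_pt v) = proj_pt (M *v v)" if N: "N \<in> pcls M" for N
  proof -
    obtain c where c: "c \<noteq> 0" "N = smat c M" using N unfolding pcls_mem by blast
    have nv: "N *v v = c *s (M *v v)" unfolding c(2) by (rule smat_mv)
    have "mact N (proj_pt v) = proj_pt (N *v v)" by (rule mact_proj)
    also have "\<dots> = proj_pt (c *s (M *v v))" by (simp only: nv)
    also have "\<dots> = proj_pt (M *v v)" by (rule proj_smult[OF c(1)])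
    finally show ?thesis .
  qed
  have "pact (pcls M) (proj_pt v) = (\<Union>N\<in>pcls M. proj_pt (M *v v))"
    unfolding pact_def by (rule SUP_cong[OF refl eq])
  also have "\<dots> = proj_pt (M *v v)"
  proof -
    have "pcls M \<noteq> {}" using pcls_self[of M] by auto
    then show ?thesis by (simp only: UN_constant if_False)
  qed
  finally show ?thesis .
qed

lemma smat_mm: "smat a A ** smat b B = smat (a * b) (A ** B)" for A :: "'a::field^3^3"
  by (simp add: vec_eq_iff mm_nth smat_def algebra_simps)

lemma pmul_pcls: "pmul (pcls A) (pcls B) = pcls (A ** B)" for A :: "'a::field^3^3"
proof (rule set_eqI)
  fix X
  show "X \<in> pmul (pcls A) (pcls B) \<longleftrightarrow> X \<in> pcls (A ** B)"
  proof
    assume "X \<in> pmul (pcls A) (pcls B)"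
    then obtain a b where "a \<noteq> 0" "b \<noteq> 0" "X = smat a A ** smat b B"
      by (auto simp: pmul_def pcls_mem)
    then show "X \<in> pcls (A ** B)" unfolding pcls_mem smat_mm by (intro exI[of _ "a * b"]) simp
  next
    assume "X \<in> pcls (A ** B)"
    then obtain c where "c \<noteq> 0" "X = smat c (A ** B)" by (auto simp: pcls_mem)
    then have "X = smat c A ** smat 1 B" by (simp add: smat_mm)
    moreover have "smat c A \<in> pcls A"
      using \<open>c \<noteq> 0\<close> unfolding pcls_mem by blast
    moreover have "smat 1 B \<in> pcls B" using pcls_self[of B] by (simp add: smat_1)
    ultimately show "X \<in> pmul (pcls A) (pcls B)" unfolding pmul_def by blast
  qed
qed

lemma ppow_pcls: "ppow (pcls A) n = pcls (mpow A n)" for A :: "'a::field^3^3"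
  by (induct n) (simp_all add: pmul_pcls)

lemma det3_smult_eq0: "a \<noteq> 0 \<Longrightarrow> b \<noteq> 0 \<Longrightarrow> c \<noteq> 0 \<Longrightarrow> det3 (a *s x) (b *s y) (c *s z) = 0 \<longleftrightarrow> det3 x y z = 0"
  for x :: "'a::field^3"
  by (simp add: det3_smult)

lemma pline_iff:
  fixes x y z :: "'a::field^3"
  assumes "z \<noteq> 0"
  shows "proj_pt z \<in> pline (proj_pt x) (proj_pt y) \<longleftrightarrow> det3 x y z = 0"
proof
  assume "proj_pt z \<in> pline (proj_pt x) (proj_pt y)"
  then obtain x' y' z' where "x' \<in> proj_pt x" "y' \<in> proj_pt y" "z' \<in> proj_pt z" "det3 x' y' z' = 0"
    unfolding pline_def by blast
  then obtain a b c where "a \<noteq> 0" "b \<noteq> 0" "c \<noteq> 0" "det3 (a *s x) (b *s y) (c *s z) = 0"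
    unfolding proj_mem by blast
  then show "det3 x y z = 0" by (simp add: det3_smult)
next
  assume "det3 x y z = 0"
  then show "proj_pt z \<in> pline (proj_pt x) (proj_pt y)"
    unfolding pline_def using proj_self[of x] proj_self[of y] proj_self[of z] proj_points[OF assms] by blast
qed

lemma qf_qscale: "qf (qscale t k) v = t * qf k v"
  by (cases k) (simp add: algebra_simps)
lemma qf_smult: "qf k (c *s v) = c^2 * qf k v"
  by (cases k) (simp add: algebra_simps power2_eq_square)
lemma qscale_qscale: "qscale s (qscale t k) = qscale (s * t) k"
  by (cases k) (simp add: algebra_simps)
lemma qscale_1: "qscale 1 k = k"
  by (cases k) simp

lemma qf_determines:
  fixes k k' :: "'a::comm_ring_1 qform"
  assumes "\<And>v. qf k v = qf k' v"
  shows "k = k'"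
proof -
  obtain a b c d e f where k: "k = (a, b, c, d, e, f)" by (cases k) auto
  obtain a' b' c' d' e' f' where k': "k' = (a', b', c', d', e', f')" by (cases k') auto
  have 1: "a = a'" using assms[of "vector [1,0,0]"] by (simp add: k k')
  have 2: "b = b'" using assms[of "vector [0,1,0]"] by (simp add: k k')
  have 3: "c = c'" using assms[of "vector [0,0,1]"] by (simp add: k k')
  have 4: "d = d'" using assms[of "vector [1,1,0]"] 1 2 by (simp add: k k')
  have 5: "e = e'" using assms[of "vector [1,0,1]"] 1 3 by (simp add: k k')
  have 6: "f = f'" using assms[of "vector [0,1,1]"] 2 3 by (simp add: k k')
  show ?thesis using 1 2 3 4 5 6 k k' by simp
qed

lemma conic_rep:
  assumes "K \<in> conics" "k \<in> K"
  shows "K = ccls k" "k \<noteq> (0,0,0,0,0,0)"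
proof -
  obtain k0 where k0: "K = ccls k0" "qdisc k0 \<noteq> 0" using assms(1) by (auto simp: conics_def)
  obtain t where t: "t \<noteq> 0" "k = qscale t k0" using assms(2) k0 by (auto simp: ccls_def)
  show "K = ccls k"
  proof (rule set_eqI)
    fix x
    show "x \<in> K \<longleftrightarrow> x \<in> ccls k"
    proof
      assume "x \<in> K"
      then obtain s where "s \<noteq> 0" "x = qscale s k0" using k0 by (auto simp: ccls_def)
      then have "x = qscale (s / t) k" using t by (simp add: qscale_qscale)
      then show "x \<in> ccls k" using \<open>s \<noteq> 0\<close> t by (auto simp: ccls_def)
    next
      assume "x \<in> ccls k"
      then obtain s where "s \<noteq> 0" "x = qscale s k" by (auto simp: ccls_def)
      then have "x = qscale (s * t) k0" using t by (simp add: qscale_qscale)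
      then show "x \<in> K" using \<open>s \<noteq> 0\<close> t k0 by (auto simp: ccls_def)
    qed
  qed
  show "k \<noteq> (0,0,0,0,0,0)"
  proof
    assume "k = (0,0,0,0,0,0)"
    then have "qscale (inverse t) k = (0,0,0,0,0,0)" by simp
    then have "k0 = (0,0,0,0,0,0)" using t by (simp add: qscale_qscale qscale_1)
    then show False using k0 by simp
  qed
qed

lemma cpts_iff:
  assumes "K \<in> conics" "k \<in> K" "v \<noteq> 0"
  shows "proj_pt v \<in> cpts K \<longleftrightarrow> qf k v = 0"
proof -
  have K: "K = ccls k" using conic_rep[OF assms(1,2)] by simp
  show ?thesis
  proof
    assume "proj_pt v \<in> cpts K"
    then show "qf k v = 0" using assms(2) proj_self by (auto simp: cpts_def)
  next
    assume h: "qf k v = 0"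
    show "proj_pt v \<in> cpts K"
      unfolding cpts_def
    proof (intro CollectI conjI ballI)
      show "proj_pt v \<in> points" using assms(3) by (rule proj_points)
      fix k' w assume "k' \<in> K" "w \<in> proj_pt v"
      then obtain t c where "k' = qscale t k" "w = c *s v" using K by (auto simp: ccls_def proj_mem)
      then show "qf k' w = 0" using h by (simp add: qf_qscale qf_smult)
    qed
  qed
qed

definition crs :: "'a::comm_ring_1^3 \<Rightarrow> 'a^3 \<Rightarrow> 'a^3" where
  "crs x y = vector [x$2 * y$3 - x$3 * y$2, x$3 * y$1 - x$1 * y$3, x$1 * y$2 - x$2 * y$1]"

lemma crs_nth: "crs x y $ 1 = x$2 * y$3 - x$3 * y$2" "crs x y $ 2 = x$3 * y$1 - x$1 * y$3"
  "crs x y $ 3 = x$1 * y$2 - x$2 * y$1"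
  by (simp_all add: crs_def)

lemma crs_zero:
  fixes x y :: "'a::field^3"
  assumes "x \<noteq> 0" "crs x y = 0"
  shows "\<exists>t. y = t *s x"
proof -
  have c: "x$2 * y$3 = x$3 * y$2" "x$3 * y$1 = x$1 * y$3" "x$1 * y$2 = x$2 * y$1"
    using assms(2) by (simp_all add: vec_eq_iff forall_3 crs_nth)
  obtain i where i: "x$i \<noteq> 0" using assms(1) by (auto simp: vec_eq_iff)
  have "y = (y$i / x$i) *s x"
  proof -
    have "i = 1 \<or> i = 2 \<or> i = 3" by (rule exhaust_3)
    then show ?thesis
    proof (elim disjE)
      assume "i = 1" then show ?thesis using i c
        by (simp add: vec_eq_iff forall_3 field_simps; (metis mult.commute)?)
    next
      assume "i = 2" then show ?thesis using i c
        by (simp add: vec_eq_iff forall_3 field_simps; (metis mult.commute)?)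
    next
      assume "i = 3" then show ?thesis using i c
        by (simp add: vec_eq_iff forall_3 field_simps; (metis mult.commute)?)
    qed
  qed
  then show ?thesis by blast
qed

lemma dot_crs: "dot3 (crs v w) v = 0" "dot3 (crs v w) w = 0"
  by (simp_all add: dot3_def crs_nth algebra_simps)

lemma crs_crs: "crs (crs v w) a = dot3 a v *s w - dot3 a w *s v"
  by (simp add: vec_eq_iff forall_3 crs_nth dot3_def algebra_simps)

definition mtv :: "'a::comm_ring_1^3^3 \<Rightarrow> 'a^3 \<Rightarrow> 'a^3" where
  "mtv M u = vector [M$1$1 * u$1 + M$2$1 * u$2 + M$3$1 * u$3,
                     M$1$2 * u$1 + M$2$2 * u$2 + M$3$2 * u$3,
                     M$1$3 * u$1 + M$2$3 * u$2 + M$3$3 * u$3]"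

lemma dot_mtv: "dot3 (mtv M u) x = dot3 u (M *v x)"
  by (simp add: mtv_def dot3_def mv_nth algebra_simps)

lemma dot_lincomb: "dot3 u (a *s v + b *s w) = a * dot3 u v + b * dot3 u w"
  by (simp add: dot3_def algebra_simps)

lemma lin_solve2: "(b::'a::field) \<noteq> 0 \<Longrightarrow> a * x + b * y = 0 \<Longrightarrow> y = (- a / b) * x"
  by (metis mult_minus_left neg_eq_iff_add_eq_0 nonzero_mult_div_cancel_left times_divide_eq_left)
lemma lin_solve3:
  fixes a b c x y z :: "'a::field"
  assumes hc: "c \<noteq> 0" and h: "a * x + b * y + c * z = 0"
  shows "z = (- a / c) * x + (- b / c) * y"
proof -
  have e: "- (a * x + b * y) = c * z" using h by (simp only: neg_eq_iff_add_eq_0)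
  have "z = (c * z) / c" using hc by simp
  also have "\<dots> = - (a * x + b * y) / c" using e by simp
  also have "\<dots> = (- a / c) * x + (- b / c) * y" using hc by (simp add: field_simps)
  finally show ?thesis .
qed

lemma cyclic:
  fixes M :: "'a::{field,finite}^3^3"
  assumes noeig: "\<And>v c. v \<noteq> 0 \<Longrightarrow> M *v v \<noteq> c *s v"
    and v0: "v \<noteq> 0"
  shows "det3 v (M *v v) (M *v (M *v v)) \<noteq> 0"
proof
  assume "det3 v (M *v v) (M *v (M *v v)) = 0"
  from det3_kernel[OF this] obtain a b c where abc: "a \<noteq> 0 \<or> b \<noteq> 0 \<or> c \<noteq> 0"
    "a *s v + b *s (M *v v) + c *s (M *v (M *v v)) = 0"
    by blast
  show False
  proof (cases "c = 0")
    case True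
    then have ab: "a *s v + b *s (M *v v) = 0" using abc by simp
    show False
    proof (cases "b = 0")
      case True
      then have "a \<noteq> 0" using abc \<open>c = 0\<close> by simp
      then show False using ab True v0 by (simp add: vec_eq_iff)
    next
      case False
      have "M *v v = (- a / b) *s v"
        using ab False lin_solve2[OF False] by (simp add: vec_eq_iff)
      then show False using noeig[OF v0] by blast
    qed
  next
    case False
    define al where "al = - a / c"
    define be where "be = - b / c"
    have m2: "M *v (M *v v) = al *s v + be *s (M *v v)"
      using abc(2) lin_solve3[OF False] unfolding al_def be_def
      by (simp add: vec_eq_iff)
    define u where "u = crs v (M *v v)"
    have u0: "u \<noteq> 0"
    proof
      assume "u = 0"
      then have "crs v (M *v v) = 0" using u_def by simp
      from crs_zero[OF v0 this] obtain t where "M *v v = t *s v" by blast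
      then show False using noeig[OF v0] by blast
    qed
    define u' where "u' = mtv M u"
    have d1: "dot3 u v = 0" "dot3 u (M *v v) = 0" unfolding u_def by (rule dot_crs(1), rule dot_crs(2))
    have o1: "dot3 u' v = 0" unfolding u'_def dot_mtv by (rule d1(2))
    have o2: "dot3 u' (M *v v) = 0"
      unfolding u'_def dot_mtv m2 dot_lincomb d1 by simp
    have "crs u u' = 0" unfolding u_def crs_crs using o1 o2 by simp
    from crs_zero[OF u0 this] obtain t where t: "u' = t *s u" by blast
    define A :: "'a^3^3" where "A = (\<chi> i j. M$j$i - (if i = j then t else 0))"
    define B :: "'a^3^3" where "B = (\<chi> i j. M$i$j - (if i = j then t else 0))"
    have "A *v u = u' - t *s u"
      unfolding u'_def by (simp add: vec_eq_iff forall_3 mv_nth A_def mtv_def algebra_simps)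
    then have "A *v u = 0" using t by simp
    then have "det A = 0" using det_nz_inj u0 by blast
    moreover have "det A = det B" unfolding A_def B_def det_3 by (simp add: algebra_simps)
    ultimately obtain x where x: "x \<noteq> 0" "B *v x = 0" using kernel_lemma by metis
    have "B *v x = M *v x - t *s x"
      by (simp add: vec_eq_iff forall_3 mv_nth B_def algebra_simps)
    then have "M *v x = t *s x" using x by simp
    then show False using noeig[OF x(1)] by blast
  qed
qed

definition nz :: "'a::zero^3 \<Rightarrow> bool" where "nz x \<longleftrightarrow> (\<forall>i. x$i \<noteq> 0)"

lemma vec_T:
  fixes l y z n :: "'a::field^3"
  assumes l0: "l \<noteq> 0" and nd: "n$1 \<noteq> n$2" "n$2 \<noteq> n$3" "n$1 \<noteq> n$3" and z: "nz z"
    and h1: "dot3 l z = 0" and h2: "dot3 l (n * z) = 0" and h3: "dot3 l y = 0"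
    and h4: "det3 y (n * y) z = 0"
  shows "\<exists>t. y = t *s z"
proof -
  have A: "det3 z (n * z) y = 0" by (rule det3_adj[OF l0 h1 h2 h3])
  define t where "t = y * vinv z"
  have yt: "y = t * z" using z by (simp add: vec_eq_iff t_def nz_def)
  have zz: "z$1 * z$2 * z$3 \<noteq> 0" using z by (simp add: nz_def)
  have "det3 z (n * z) (t * z) = z$1 * z$2 * z$3 *
      ((n$2*t$3 - n$3*t$2) - (n$1*t$3 - n$3*t$1) + (n$1*t$2 - n$2*t$1))"
    by (simp add: det3_def algebra_simps)
  then have D1: "(n$2*t$3 - n$3*t$2) - (n$1*t$3 - n$3*t$1) + (n$1*t$2 - n$2*t$1) = 0"
    using A yt zz by simp
  have "det3 (t * z) (n * (t * z)) z = z$1 * z$2 * z$3 *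
      (t$1*(n$2*t$2 - n$3*t$3) - t$2*(n$1*t$1 - n$3*t$3) + t$3*(n$1*t$1 - n$2*t$2))"
    by (simp add: det3_def algebra_simps)
  then have D2: "t$1*(n$2*t$2 - n$3*t$3) - t$2*(n$1*t$1 - n$3*t$3) + t$3*(n$1*t$1 - n$2*t$2) = 0"
    using h4 yt zz by simp
  have "t$1 = t$2 \<and> t$2 = t$3" by (rule scalar_T[OF nd D1 D2])
  then have "y = t$1 *s z" using yt by (simp add: vec_eq_iff forall_3)
  then show ?thesis by blast
qed

lemma nz_times: "nz x \<Longrightarrow> nz y \<Longrightarrow> nz (x * y)" for x :: "'a::field^3"
  by (simp add: nz_def)
lemma nz_vinv: "nz x \<Longrightarrow> nz (vinv x)" for x :: "'a::field^3"
  by (simp add: nz_def)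
lemma vinv_times: "vinv (x * y) = vinv x * vinv y" for x :: "'a::field^3"
  by (simp add: vec_eq_iff)
lemma vinv_vinv: "vinv (vinv x) = x" for x :: "'a::field^3"
  by (simp add: vec_eq_iff)
lemma vinv_smult: "vinv (t *s x) = inverse t *s vinv x" for x :: "'a::field^3"
  by (simp add: vec_eq_iff)

lemma key1:
  fixes l p a m :: "'a::field^3"
  assumes l0: "l \<noteq> 0" and nzs: "nz p" "nz a" "nz m"
    and hp: "dot3 l (vinv p) = 0" and ha: "dot3 l (vinv a) = 0" and hb: "dot3 l (vinv (m * a)) = 0"
  shows "det3 p (m * p) (m * a) = 0"
proof -
  define y where "y = vinv p"
  define z where "z = vinv (m * a)"
  have "m * z = vinv a" using nzs by (simp add: z_def vec_eq_iff nz_def)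
  then have "det3 z (m * z) y = 0" using det3_adj[OF l0] hp ha hb by (simp add: y_def z_def)
  moreover have "det3 z (m * z) y = det3 ((y * z) * p) ((y * z) * (m * p)) ((y * z) * (m * a))"
  proof -
    have "(y * z) * p = z" "(y * z) * (m * p) = m * z" "(y * z) * (m * a) = y"
      using nzs by (simp_all add: y_def z_def vec_eq_iff nz_def field_simps)
    then show ?thesis by simp
  qed
  moreover have "(y * z)$1 * (y * z)$2 * (y * z)$3 \<noteq> 0"
    using nzs by (simp add: y_def z_def nz_def)
  ultimately show ?thesis by (simp add: det3_scale_cols)
qed

lemma key2:
  fixes l x a m :: "'a::field^3"
  assumes l0: "l \<noteq> 0" and nzs: "nz x" "nz a" "nz m"
    and md: "m$1 \<noteq> m$2" "m$2 \<noteq> m$3" "m$1 \<noteq> m$3"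
    and hx: "dot3 l (vinv x) = 0" and ha: "dot3 l (vinv a) = 0" and hb: "dot3 l (vinv (m * a)) = 0"
    and col: "det3 (m * a) (m * (m * a)) x = 0"
  shows "\<exists>t. x = t *s (m * a)"
proof -
  define y where "y = vinv x"
  define z where "z = vinv (m * a)"
  have mz: "m * z = vinv a" using nzs by (simp add: z_def vec_eq_iff nz_def)
  have "det3 y (m * y) z = det3 ((y * z) * (m * a)) ((y * z) * (m * (m * a))) ((y * z) * x)"
  proof -
    have "(y * z) * (m * a) = y" "(y * z) * (m * (m * a)) = m * y" "(y * z) * x = z"
      using nzs by (simp_all add: y_def z_def vec_eq_iff nz_def field_simps)
    then show ?thesis by simp
  qed
  then have c: "det3 y (m * y) z = 0" using col by (simp add: det3_scale_cols)
  have "nz z" using nzs by (simp add: z_def nz_def)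
  from vec_T[OF l0 md this] obtain t where t: "y = t *s z"
    using hb ha hx c mz by (auto simp: y_def z_def)
  have "t \<noteq> 0" using t nzs by (auto simp: y_def nz_def vec_eq_iff)
  have "x = vinv y" by (simp add: y_def vinv_vinv)
  also have "\<dots> = inverse t *s (m * a)" using t by (simp add: vinv_smult z_def vinv_vinv)
  finally show ?thesis by blast
qed

lemma key3:
  fixes l x a m :: "'a::field^3"
  assumes l0: "l \<noteq> 0" and nzs: "nz x" "nz a" "nz m"
    and md: "m$1 \<noteq> m$2" "m$2 \<noteq> m$3" "m$1 \<noteq> m$3"
    and hx: "dot3 l (vinv x) = 0" and ha: "dot3 l (vinv a) = 0" and hb: "dot3 l (vinv (m * a)) = 0"
    and col: "det3 (m * a) a (m * x) = 0"
  shows "\<exists>t. x = t *s a"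
proof -
  define y where "y = vinv x"
  define w where "w = vinv a"
  define n where "n = vinv m"
  have nd: "n$1 \<noteq> n$2" "n$2 \<noteq> n$3" "n$1 \<noteq> n$3" using md nzs by (auto simp: n_def nz_def)
  have nw: "n * w = vinv (m * a)" by (simp add: n_def w_def vec_eq_iff)
  define s where "s = n * w * y"
  have "det3 y (n * y) w = det3 (s * (m * a)) (s * a) (s * (m * x))"
  proof -
    have "s * (m * a) = y" "s * a = n * y" "s * (m * x) = w"
      using nzs by (simp_all add: s_def n_def w_def y_def vec_eq_iff nz_def field_simps)
    then show ?thesis by simp
  qed
  then have c: "det3 y (n * y) w = 0" using col by (simp add: det3_scale_cols)
  have "nz w" using nzs by (simp add: w_def nz_def)
  from vec_T[OF l0 nd this] obtain t where t: "y = t *s w"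
    using hb ha hx c nw by (auto simp: y_def w_def)
  have "x = vinv y" by (simp add: y_def vinv_vinv)
  also have "\<dots> = inverse t *s a" using t by (simp add: vinv_smult w_def vinv_vinv)
  finally show ?thesis by blast
qed

locale ebasis =
  fixes e1 e2 e3 :: "'b::field^3" and N :: "'b^3^3" and m :: "'b^3"
  assumes D0: "det3 e1 e2 e3 \<noteq> 0"
    and ev1: "N *v e1 = m$1 *s e1" and ev2: "N *v e2 = m$2 *s e2" and ev3: "N *v e3 = m$3 *s e3"
    and md: "m$1 \<noteq> m$2" "m$2 \<noteq> m$3" "m$1 \<noteq> m$3"
begin

definition crd :: "'b^3 \<Rightarrow> 'b^3" where
  "crd w = vector [det3 w e2 e3 / det3 e1 e2 e3, det3 e1 w e3 / det3 e1 e2 e3, det3 e1 e2 w / det3 e1 e2 e3]"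

abbreviation lin where "lin \<equiv> vlin e1 e2 e3"

lemma cramer_id: "det3 e1 e2 e3 *s w = det3 w e2 e3 *s e1 + det3 e1 w e3 *s e2 + det3 e1 e2 w *s e3"
  by (simp add: vec_eq_iff forall_3 det3_def algebra_simps)

lemma lin_crd: "lin (crd w) = w"
proof -
  have "lin (crd w) = inverse (det3 e1 e2 e3) *s (det3 w e2 e3 *s e1 + det3 e1 w e3 *s e2 + det3 e1 e2 w *s e3)"
    unfolding vlin_def crd_def by (simp add: vec_eq_iff divide_inverse algebra_simps)
  also have "\<dots> = inverse (det3 e1 e2 e3) *s (det3 e1 e2 e3 *s w)" by (simp only: cramer_id)
  also have "\<dots> = w" using D0 by simp
  finally show ?thesis .
qed

lemma crd_lin: "crd (lin x) = x"
proof -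
  have "det3 (lin x) e2 e3 = x$1 * det3 e1 e2 e3" "det3 e1 (lin x) e3 = x$2 * det3 e1 e2 e3"
    "det3 e1 e2 (lin x) = x$3 * det3 e1 e2 e3"
    by (simp_all add: vlin_def det3_def algebra_simps)
  then show ?thesis using D0 by (simp add: crd_def vec_eq_iff forall_3)
qed

lemma crd_inj: "crd u = crd v \<Longrightarrow> u = v"
  by (metis lin_crd)

lemma crd_smult: "crd (c *s w) = c *s crd w"
  by (simp add: crd_def vec_eq_iff forall_3 det3_def algebra_simps)

lemma crd_zero_iff: "crd w = 0 \<longleftrightarrow> w = 0"
  by (metis lin_crd crd_lin vlin_def vector_smult_lzero add_0 zero_index)

lemma N_lin: "N *v lin x = lin (m * x)"
  by (simp add: vlin_def mv_add mv_smult ev1 ev2 ev3 algebra_simps)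

lemma crd_N: "crd (N *v w) = m * crd w"
  by (metis N_lin lin_crd crd_lin)

lemma crd_e: "crd e1 = vector [1,0,0]" "crd e2 = vector [0,1,0]" "crd e3 = vector [0,0,1]"
proof -
  have "lin (vector [1,0,0]) = e1" "lin (vector [0,1,0]) = e2" "lin (vector [0,0,1]) = e3"
    by (simp_all add: vlin_def)
  then show "crd e1 = vector [1,0,0]" "crd e2 = vector [0,1,0]" "crd e3 = vector [0,0,1]"
    by (metis crd_lin)+
qed

lemma eig_line:
  assumes "N *v w = c *s w" "w \<noteq> 0"
  shows "\<exists>i. \<forall>j. j \<noteq> i \<longrightarrow> crd w $ j = 0"
proof -
  have "m * crd w = c *s crd w" using crd_N[of w] assms(1) crd_smult[of c w] by simp
  then have h: "m$j * crd w $ j = c * crd w $ j" for j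
    by (simp add: vec_eq_iff)
  obtain i where i: "crd w $ i \<noteq> 0" using assms(2) crd_zero_iff by (auto simp: vec_eq_iff)
  have ci: "m$i = c" using h[of i] i by simp
  have "m$j \<noteq> m$i" if "j \<noteq> i" for j
    using md that exhaust_3[of i] exhaust_3[of j] by auto
  then have "crd w $ j = 0" if "j \<noteq> i" for j using h[of j] ci that by auto
  then show ?thesis by blast
qed

lemma det3_colzero:
  fixes x y z :: "'c::comm_ring_1^3"
  assumes "x$i = 0" "y$i = 0" "z$i = 0"
  shows "det3 x y z = 0"
  using assms exhaust_3[of i] by (auto simp: det3_def)

end

lemma eig_coef0:
  fixes N :: "'b::field^3^3"
  assumes "N *v e1 = m1 *s e1" "N *v e2 = m2 *s e2" "N *v e3 = m3 *s e3" "e1 \<noteq> 0"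
    "m1 \<noteq> m2" "m1 \<noteq> m3" and u: "a *s e1 + b *s e2 + c *s e3 = 0"
  shows "a = 0"
proof -
  have "N *v (N *v (a *s e1 + b *s e2 + c *s e3)) - (m2 + m3) *s (N *v (a *s e1 + b *s e2 + c *s e3))
        + (m2 * m3) *s (a *s e1 + b *s e2 + c *s e3) = (a * (m1 - m2) * (m1 - m3)) *s e1"
    by (simp only: mv_add mv_smult assms(1-3)) (simp add: vec_eq_iff algebra_simps)
  then have "(a * (m1 - m2) * (m1 - m3)) *s e1 = 0" using u by (simp add: mv_zero)
  then have "a * (m1 - m2) * (m1 - m3) = 0" using assms(4) by (auto simp: vec_eq_iff)
  then show ?thesis using assms(5,6) by simp
qed

lemma eig_indep:
  fixes N :: "'b::{field,finite}^3^3"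
  assumes ev: "N *v e1 = m1 *s e1" "N *v e2 = m2 *s e2" "N *v e3 = m3 *s e3"
    and nz: "e1 \<noteq> 0" "e2 \<noteq> 0" "e3 \<noteq> 0" and md: "m1 \<noteq> m2" "m2 \<noteq> m3" "m1 \<noteq> m3"
  shows "det3 e1 e2 e3 \<noteq> 0"
proof
  assume "det3 e1 e2 e3 = 0"
  from det3_kernel[OF this] obtain a b c where abc: "a \<noteq> 0 \<or> b \<noteq> 0 \<or> c \<noteq> 0"
    "a *s e1 + b *s e2 + c *s e3 = 0" by blast
  have "a = 0" by (rule eig_coef0[OF ev nz(1) md(1) md(3) abc(2)])
  moreover have "b = 0"
  proof -
    have h: "b *s e2 + a *s e1 + c *s e3 = 0" using abc(2) by (simp add: algebra_simps)
    show ?thesis by (rule eig_coef0[OF ev(2) ev(1) ev(3) nz(2) md(1)[symmetric] md(2) h])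
  qed
  moreover have "c = 0"
  proof -
    have h: "c *s e3 + a *s e1 + b *s e2 = 0" using abc(2) by (simp add: algebra_simps)
    show ?thesis by (rule eig_coef0[OF ev(3) ev(1) ev(2) nz(3) md(3)[symmetric] md(2)[symmetric] h])
  qed
  ultimately show False using abc(1) by simp
qed

lemma mpow_add: "mpow A (a + b) = mpow A a ** mpow A b"
  by (induct a) (simp_all add: matrix_mul_assoc)

lemma mpow_mult: "mpow A (a * b) = mpow (mpow A a) b"
  by (induct b) (simp_all add: mpow_add)

lemma mpow_mat1: "mpow (mat 1) n = mat 1"
  by (induct n) simp_all

lemma smat_mat1_mm: "smat c (mat 1) ** A = smat c A" for A :: "'a::field^3^3"
  by (simp add: vec_eq_iff forall_3 mm_nth mat_def smat_def)

lemma mpow_smat: "mpow (smat c A) n = smat (c^n) (mpow A n)" for A :: "'a::field^3^3"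
proof (induct n)
  case 0 then show ?case by (simp add: smat_1)
next
  case (Suc n) then show ?case by (simp add: smat_mm)
qed

lemma mpow_commute: "A ** mpow A n = mpow A n ** A"
proof (induct n)
  case 0 then show ?case by simp
next
  case (Suc n)
  have "A ** mpow A (Suc n) = A ** (A ** mpow A n)" by simp
  also have "\<dots> = A ** (mpow A n ** A)" using Suc by simp
  also have "\<dots> = mpow A (Suc n) ** A" by (simp add: matrix_mul_assoc)
  finally show ?case .
qed

lemma det_smat: "det (smat c A) = c^3 * det A" for A :: "'a::field^3^3"
  by (simp add: det_3 smat_def algebra_simps power3_eq_cube)

lemma det_mpow: "det (mpow A n) = det A ^ n" for A :: "'a::field^3^3"
  by (induct n) (simp_all add: det_mul)

lemma mm_cancel:
  fixes P :: "'a::field^3^3"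
  assumes "det P \<noteq> 0" "X ** P = Y ** P"
  shows "X = Y"
proof -
  obtain P' where P': "P ** P' = mat 1" using assms(1) invertible_det_nz invertible_def by blast
  have "X = (X ** P) ** P'" by (simp add: P' matrix_mul_assoc[symmetric])
  also have "\<dots> = Y" using assms(2) by (simp add: P' matrix_mul_assoc[symmetric])
  finally show ?thesis .
qed

lemma pcls_smat: "c \<noteq> 0 \<Longrightarrow> pcls (smat c A) = pcls A" for A :: "'a::field^3^3"
  by (rule pcls_of_mem) (auto simp: pcls_mem)

lemma singer_order:
  fixes G0 :: "'a::field^3^3"
  assumes dG: "det G0 \<noteq> 0" and cn: "card (range (\<lambda>j. pcls (mpow G0 j))) = n" and n1: "n \<ge> 1"
  shows "\<exists>c. c \<noteq> 0 \<and> mpow G0 n = smat c (mat 1)"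
proof -
  define f where "f = (\<lambda>j. pcls (mpow G0 j))"
  have "card (range f) > 0" using cn n1 by (simp add: f_def)
  then have fin: "finite (range f)" by (rule card_ge_0_finite)
  have "\<not> inj_on f {..n}"
  proof
    assume "inj_on f {..n}"
    then have "card {..n} \<le> card (range f)" using fin by (intro card_inj_on_le) auto
    then show False using cn by (simp add: f_def)
  qed
  then obtain i j where ij: "i \<le> n" "j \<le> n" "i < j" "f i = f j"
    unfolding inj_on_def by (metis atMost_iff linorder_neqE_nat)
  have "mpow G0 j \<in> pcls (mpow G0 i)" using ij(4) pcls_self[of "mpow G0 j"] by (simp add: f_def)
  then obtain c where c: "c \<noteq> 0" "mpow G0 j = smat c (mpow G0 i)" by (auto simp: pcls_mem)
  define d where "d = j - i"
  have "mpow G0 d ** mpow G0 i = smat c (mat 1) ** mpow G0 i"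
    using c(2) ij(3) mpow_add[of G0 d i] by (simp add: d_def smat_mat1_mm)
  then have d: "mpow G0 d = smat c (mat 1)"
    by (rule mm_cancel[rotated]) (simp add: det_mpow dG)
  have fm: "f m = f (m mod d)" for m
  proof -
    have "mpow G0 m = mpow G0 (d * (m div d) + m mod d)" by simp
    also have "\<dots> = smat (c ^ (m div d)) (mpow G0 (m mod d))"
      by (simp only: mpow_add mpow_mult d mpow_smat mpow_mat1 smat_mat1_mm)
    finally show ?thesis using c(1) by (simp add: f_def pcls_smat)
  qed
  have "range f \<subseteq> f ` {..<d}"
  proof
    fix x assume "x \<in> range f"
    then obtain m where "x = f m" by blast
    moreover have "m mod d < d" using ij(3) by (simp add: d_def)
    ultimately show "x \<in> f ` {..<d}" using fm by auto
  qed
  then have "card (range f) \<le> card (f ` {..<d})" by (intro card_mono) auto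
  also have "\<dots> \<le> d" using card_image_le[of "{..<d}" f] by simp
  finally have "n \<le> d" using cn by (simp add: f_def)
  moreover have "d \<le> n" using ij by (simp add: d_def)
  ultimately have "d = n" by simp
  then show ?thesis using d c(1) by blast
qed

lemma proj_ratio:
  fixes \<phi> :: "'a::field \<Rightarrow> 'b::field"
  assumes fe: "field_emb \<phi>" and x0: "x \<noteq> 0" and y0: "y \<noteq> 0"
    and h: "vmap \<phi> x = \<tau> *s vmap \<phi> y"
  shows "proj_pt x = proj_pt y"
proof -
  obtain i where i: "y$i \<noteq> 0" using y0 by (auto simp: vec_eq_iff)
  have "\<phi> (x$i) = \<tau> * \<phi> (y$i)" using h by (simp add: vec_eq_iff)
  then have t: "\<tau> = \<phi> (x$i / y$i)" using i fe_eq0[OF fe] by (simp add: fe_divide[OF fe] field_simps)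
  have "vmap \<phi> x = vmap \<phi> ((x$i / y$i) *s y)" using h t by (simp add: vmap_smult[OF fe])
  then have xy: "x = (x$i / y$i) *s y" using vmap_inj[OF fe] by blast
  then have "x$i / y$i \<noteq> 0" using x0 by auto
  then show ?thesis using xy proj_smult by metis
qed

lemma det_mmap:
  fixes \<phi> :: "'a::field \<Rightarrow> 'b::field"
  assumes fe: "field_emb \<phi>"
  shows "det (mmap \<phi> M) = \<phi> (det M)"
  by (simp add: det_3 fe_simps[OF fe])

lemma mmap_smat: "field_emb \<phi> \<Longrightarrow> mmap \<phi> (smat c M) = smat (\<phi> c) (mmap \<phi> M)"
  by (simp add: vec_eq_iff smat_def fe_simps)

lemma mpow_eig: "N *v e = r *s e \<Longrightarrow> mpow N j *v e = (r ^ j) *s e" for N :: "'b::field^3^3"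
  by (induct j) (simp_all add: matrix_vector_mul_assoc[symmetric] mv_smult)

lemma ccls_qscale:
  assumes "K \<in> conics" "k \<in> K" "t \<noteq> 0"
  shows "ccls (qscale t k) = K"
proof -
  have "K = ccls k" using conic_rep[OF assms(1,2)] by simp
  then have "qscale t k \<in> K" using assms(3) by (auto simp: ccls_def)
  then show ?thesis using conic_rep[OF assms(1)] by simp
qed

lemma card_field_ge2: "CARD('a::{field,finite}) \<ge> 2"
proof -
  have "card {0::'a, 1} \<le> card (UNIV::'a set)" by (rule card_mono) auto
  then show ?thesis by simp
qed

lemma nat_cube: "(q::nat) \<ge> 1 \<Longrightarrow> q ^ 3 = Suc ((q^2 + q + 1) * (q - 1))"
proof -
  assume "q \<ge> 1"
  then obtain r where "q = Suc r" by (cases q) auto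
  then show ?thesis by (simp add: power2_eq_square power3_eq_cube algebra_simps)
qed

lemma fermat_pred: "(x::'c::{field,finite}) \<noteq> 0 \<Longrightarrow> x ^ (CARD('c) - 1) = 1"
proof -
  assume x: "x \<noteq> 0"
  have "CARD('c) = Suc (CARD('c) - 1)" by simp
  then have "x * x ^ (CARD('c) - 1) = x * 1" using fermat_field[of x] by (metis power_Suc mult_1_right)
  then show ?thesis using x by simp
qed

lemma qf_lin0:
  assumes "qf k e1 = 0" "qf k e2 = 0" "qf k e3 = 0"
  shows "qf k (vlin e1 e2 e3 x) = x$2 * x$3 * pol k e2 e3 + x$1 * x$3 * pol k e1 e3 + x$1 * x$2 * pol k e1 e2"
  using assms by (simp add: qf_lin algebra_simps)

lemma dot_vinv:
  fixes x l :: "'a::field^3"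
  assumes "nz x"
  shows "dot3 l (vinv x) * (x$1 * x$2 * x$3) = x$2 * x$3 * l$1 + x$1 * x$3 * l$2 + x$1 * x$2 * l$3"
  using assms by (simp add: dot3_def nz_def field_simps)

context ebasis
begin

lemma eig_k:
  assumes h: "N *v w = m$i *s w" and ji: "j \<noteq> i"
  shows "crd w $ j = 0"
proof -
  have "m * crd w = m$i *s crd w" using crd_N[of w] h crd_smult by simp
  then have "m$j * crd w $ j = m$i * crd w $ j" by (simp add: vec_eq_iff)
  moreover have "m$j \<noteq> m$i" using md ji exhaust_3[of i] exhaust_3[of j] by auto
  ultimately show ?thesis by simp
qed

lemma eig1: "N *v w = m$1 *s w \<Longrightarrow> w = (crd w $ 1) *s e1"
  using eig_k[of w 1 2] eig_k[of w 1 3] lin_crd[of w] by (simp add: vlin_def)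
lemma eig2: "N *v w = m$2 *s w \<Longrightarrow> w = (crd w $ 2) *s e2"
  using eig_k[of w 2 1] eig_k[of w 2 3] lin_crd[of w] by (simp add: vlin_def)
lemma eig3: "N *v w = m$3 *s w \<Longrightarrow> w = (crd w $ 3) *s e3"
  using eig_k[of w 3 1] eig_k[of w 3 2] lin_crd[of w] by (simp add: vlin_def)

end

lemma smat_mm_left: "smat s X ** Y = smat s (X ** Y)" for X :: "'a::field^3^3"
  by (simp add: vec_eq_iff forall_3 mm_nth smat_def algebra_simps)
lemma smat_mm_right: "Y ** smat s X = smat s (Y ** X)" for X :: "'a::field^3^3"
  by (simp add: vec_eq_iff forall_3 mm_nth smat_def algebra_simps)

theorem lemma3p8:
  fixes C1 :: "('a::{field,finite} ^ 3 ^ 3) set set"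
    and \<phi> :: "'a \<Rightarrow> 'b::{field,finite}"
    and g :: "('a ^ 3 ^ 3) set"
    and K K' :: "'a qform set"
    and A B :: "('a ^ 3) set"
  assumes "singer C1"
    and "field_emb \<phi>" and "CARD('b) = CARD('a) ^ 3"
    and "K \<in> circ_bundle \<phi> C1" and "K' \<in> circ_bundle \<phi> C1" and "K \<noteq> K'"
    and "g \<in> C1" and "cimg_rel g K K'"
    and "cpts K \<inter> cpts K' = {B}"
    and "A \<in> cpts K" and "pact g A = B"
  shows "(\<forall>P \<in> cpts K - {A, B}. B \<in> pline P (pact g P))
       \<and> tangent_at (pline B (pact g B)) K B
       \<and> (\<forall>R \<in> points. pact g R = B \<longrightarrow> tangent_at (pline B R) K' B)"
proof -
  note fe = assms(2)
  have C1pgl: "C1 \<subseteq> pgl" and exG: "\<exists>G\<in>pgl. C1 = range (ppow G)"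
    and cardC: "card C1 = CARD('a)^2 + CARD('a) + 1"
    and reg: "\<forall>P\<in>points. \<forall>Q\<in>points. \<exists>!g. g \<in> C1 \<and> pact g P = Q"
    using assms(1) unfolding singer_def by auto
  obtain G where G: "G \<in> pgl" "C1 = range (ppow G)" using exG by blast
  obtain G0 where G0: "G = pcls G0" "invertible G0" using G(1) by (auto simp: pgl_def)
  have dG0: "det G0 \<noteq> 0" using G0(2) invertible_det_nz by blast
  have C1eq: "C1 = range (\<lambda>j. pcls (mpow G0 j))" using G(2) G0(1) by (simp add: ppow_pcls)
  define q where "q = CARD('a)"
  define n where "n = q^2 + q + 1"
  have q2: "q \<ge> 2" using card_field_ge2 by (simp add: q_def)
  obtain c0 where c0: "c0 \<noteq> 0" "mpow G0 n = smat c0 (mat 1)"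
    using singer_order[OF dG0, of n] cardC C1eq by (auto simp: n_def q_def)
  obtain kk where g: "g = pcls (mpow G0 kk)" using assms(7) C1eq by auto
  obtain M1 k1 k1' where M1: "M1 \<in> g" "k1 \<in> K" "k1' \<in> K'" "\<And>v. qf k1' (M1 *v v) = qf k1 v"
    using assms(8) unfolding cimg_rel_def by blast
  obtain s where s: "s \<noteq> 0" "M1 = smat s (mpow G0 kk)" using M1(1) g by (auto simp: pcls_mem)
  have gM1: "g = pcls M1" using pcls_of_mem M1(1) g by metis
  have dM1: "det M1 \<noteq> 0" using s dG0 by (simp add: det_smat det_mpow)
  have Kc: "K \<in> conics" "K' \<in> conics" using assms(4,5) by (auto simp: circ_bundle_def)
  have pactg: "pact g (proj_pt v) = proj_pt (M1 *v v)" for v by (simp add: gM1 pact_pcls)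
  have I1: "pcls (mat 1) \<in> C1" using C1eq by (auto intro: range_eqI[of _ _ 0])
  have actI: "pact (pcls (mat 1)) (proj_pt v) = proj_pt v" for v :: "'a^3"
    by (simp add: pact_pcls)
  have noeig: "M1 *v v \<noteq> c *s v" if v: "v \<noteq> 0" for v c
  proof
    assume e: "M1 *v v = c *s v"
    have c0: "c \<noteq> 0"
    proof
      assume "c = 0"
      then have "M1 *v v = 0" using e by simp
      then show False using det_nz_inj[OF dM1] v by blast
    qed
    have P: "proj_pt v \<in> points" using v by (rule proj_points)
    have "pact g (proj_pt v) = proj_pt v" using pactg e proj_smult[OF c0] by simp
    moreover have "pact (pcls (mat 1)) (proj_pt v) = proj_pt v" by (rule actI)
    moreover have "\<exists>!g. g \<in> C1 \<and> pact g (proj_pt v) = proj_pt v" using reg[rule_format, OF P P] .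
    then obtain g0 where "\<forall>y. y \<in> C1 \<and> pact y (proj_pt v) = proj_pt v \<longrightarrow> y = g0"
      by (rule ex1E) blast
    ultimately have "g = pcls (mat 1)" using assms(7) I1 by metis
    then have "M1 \<in> pcls (mat 1)" using gM1 pcls_self by metis
    then obtain c' where c': "c' \<noteq> 0" "M1 = smat c' (mat 1)" by (auto simp: pcls_mem)
    have "qf (qscale (c'^2) k1') w = qf k1 w" for w
      using M1(4)[of w] c'(2) by (simp add: smat_mv qf_smult qf_qscale)
    then have "qscale (c'^2) k1' = k1" by (rule qf_determines)
    then have "K' = ccls k1" using ccls_qscale[OF Kc(2) M1(3), of "c'^2"] c'(1) by simp
    moreover have "K = ccls k1" using conic_rep[OF Kc(1) M1(2)] by simp
    ultimately show False using assms(6) by simp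
  qed
  have cyc: "det3 v (M1 *v v) (M1 *v (M1 *v v)) \<noteq> 0" if "v \<noteq> 0" for v
    using cyclic[OF _ that] noeig by blast
  define Q where "Q = CARD('b)"
  have Qq: "Q = Suc (n * (q - 1))" using assms(3) nat_cube[of q] q2 by (simp add: Q_def q_def n_def)
  have sq: "s ^ (q - 1) = 1" using fermat_pred[OF s(1)] by (simp add: q_def)
  have cq: "c0 ^ (q - 1) = 1" using fermat_pred[OF c0(1)] by (simp add: q_def)
  have "mpow G0 (kk * (n * (q - 1))) = mpow (mpow G0 n) (kk * (q - 1))"
    by (simp add: mpow_mult[symmetric] algebra_simps)
  also have "\<dots> = mat 1"
  proof -
    have "c0 ^ (kk * (q - 1)) = 1" by (simp only: mult.commute[of kk] power_mult cq power_one)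
    then show ?thesis by (simp add: c0(2) mpow_smat mpow_mat1 smat_1)
  qed
  finally have gp: "mpow G0 (kk * (n * (q - 1))) = mat 1" .
  have "mpow M1 (n * (q - 1)) = smat (s ^ (n * (q - 1))) (mpow G0 (kk * (n * (q - 1))))"
    by (simp only: s(2) mpow_smat, simp only: mpow_mult)
  also have "\<dots> = mat 1"
  proof -
    have "s ^ (n * (q - 1)) = 1" by (simp only: mult.commute[of n] power_mult sq power_one)
    then show ?thesis by (simp only: gp smat_1)
  qed
  finally have "mpow M1 (n * (q - 1)) = mat 1" .
  then have pow: "mpow M1 Q = M1" by (simp add: Qq)
  define N where "N = mmap \<phi> M1"
  have powN: "mpow N CARD('b) = N" using pow by (simp add: N_def mmap_mpow[OF fe, symmetric] Q_def)
  have Nmv: "vmap \<phi> (M1 *v v) = N *v vmap \<phi> v" for v by (simp add: N_def vmap_mv[OF fe])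
  define v0 :: "'a^3" where "v0 = vector [1,0,0]"
  have v00: "v0 \<noteq> 0" by (simp add: v0_def vec_eq_iff forall_3)
  define w0 where "w0 = vmap \<phi> v0"
  have w0: "det3 w0 (N *v w0) (N *v (N *v w0)) \<noteq> 0"
    using cyc[OF v00] fe_eq0[OF fe] by (simp add: w0_def Nmv[symmetric] fe_det3[OF fe, symmetric])
  have Q3: "CARD('b) \<ge> 3"
  proof -
    have "q ^ 3 \<ge> 2 ^ 3" using q2 by (rule power_mono) simp
    then show ?thesis using assms(3) by (simp add: q_def)
  qed
  obtain m1 m2 m3 e1 e2 e3 where eig: "m1 \<noteq> m2" "m2 \<noteq> m3" "m1 \<noteq> m3" "e1 \<noteq> 0" "e2 \<noteq> 0" "e3 \<noteq> 0"
     "N *v e1 = m1 *s e1" "N *v e2 = m2 *s e2" "N *v e3 = m3 *s e3"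
    using three_eigen[OF powN w0 Q3] by blast
  have D0: "det3 e1 e2 e3 \<noteq> 0" by (rule eig_indep[OF eig(7-9) eig(4-6) eig(1-3)])
  define m :: "'b^3" where "m = vector [m1, m2, m3]"
  interpret eb: ebasis e1 e2 e3 N m
    by unfold_locales (use D0 eig in \<open>simp_all add: m_def\<close>)
  have m_nth: "m$1 = m1" "m$2 = m2" "m$3 = m3" by (simp_all add: m_def)
  have crdN: "eb.crd (vmap \<phi> (M1 *v v)) = m * eb.crd (vmap \<phi> v)" for v
    by (simp add: Nmv eb.crd_N)
  have ratnz: "nz (eb.crd (vmap \<phi> v))" if v: "v \<noteq> 0" for v
  proof (unfold nz_def, rule allI, rule notI)
    fix i assume xi: "eb.crd (vmap \<phi> v) $ i = 0"
    define x where "x = eb.crd (vmap \<phi> v)"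
    have "\<phi> (det3 v (M1 *v v) (M1 *v (M1 *v v)))
        = det3 (eb.lin x) (eb.lin (m * x)) (eb.lin (m * (m * x)))"
      by (simp add: fe_det3[OF fe] x_def crdN[symmetric] eb.lin_crd)
    also have "\<dots> = det3 x (m * x) (m * (m * x)) * det3 e1 e2 e3" by (rule det3_lin)
    also have "det3 x (m * x) (m * (m * x)) = 0"
      by (rule eb.det3_colzero[of _ i]) (use xi in \<open>simp_all add: x_def\<close>)
    finally have "\<phi> (det3 v (M1 *v v) (M1 *v (M1 *v v))) = 0" by simp
    then show False using cyc[OF v] fe_eq0[OF fe] by blast
  qed
  have dN: "det N \<noteq> 0" using dM1 by (simp add: N_def det_mmap[OF fe] fe_eq0[OF fe])
  have mnz: "nz m"
  proof -
    have "m$i \<noteq> 0" for i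
    proof
      assume mi: "m$i = 0"
      have "i = 1 \<or> i = 2 \<or> i = 3" by (rule exhaust_3)
      then show False
      proof (elim disjE)
        assume "i = 1" then have "N *v e1 = 0" using mi eig(7) m_nth by simp
        then show False using det_nz_inj[OF dN] eig(4) by blast
      next
        assume "i = 2" then have "N *v e2 = 0" using mi eig(8) m_nth by simp
        then show False using det_nz_inj[OF dN] eig(5) by blast
      next
        assume "i = 3" then have "N *v e3 = 0" using mi eig(9) m_nth by simp
        then show False using det_nz_inj[OF dN] eig(6) by blast
      qed
    qed
    then show ?thesis by (simp add: nz_def)
  qed
  define Gt where "Gt = mmap \<phi> G0"
  have dGt: "det Gt \<noteq> 0" using dG0 by (simp add: Gt_def det_mmap[OF fe] fe_eq0[OF fe])
  have "M1 ** G0 = G0 ** M1"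
    by (simp add: s(2) smat_mm_left smat_mm_right mpow_commute)
  then have NG: "N ** Gt = Gt ** N" by (simp add: N_def Gt_def mmap_mm[OF fe, symmetric])
  have Geig: "N *v (Gt *v e) = r *s (Gt *v e)" if "N *v e = r *s e" for e r
  proof -
    have "N *v (Gt *v e) = Gt *v (N *v e)" by (simp add: matrix_vector_mul_assoc NG)
    then show ?thesis using that by (simp add: mv_smult)
  qed
  have Gnz: "Gt *v e \<noteq> 0" if "e \<noteq> 0" for e using det_nz_inj[OF dGt] that by blast
  obtain r1 where r1: "Gt *v e1 = r1 *s e1" "r1 \<noteq> 0"
  proof -
    have "Gt *v e1 = (eb.crd (Gt *v e1) $ 1) *s e1"
      by (rule eb.eig1) (use Geig[OF eig(7)] m_nth in simp)
    then show ?thesis using that Gnz[OF eig(4)] by (metis vector_smult_lzero)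
  qed
  obtain r2 where r2: "Gt *v e2 = r2 *s e2" "r2 \<noteq> 0"
  proof -
    have "Gt *v e2 = (eb.crd (Gt *v e2) $ 2) *s e2"
      by (rule eb.eig2) (use Geig[OF eig(8)] m_nth in simp)
    then show ?thesis using that Gnz[OF eig(5)] by (metis vector_smult_lzero)
  qed
  obtain r3 where r3: "Gt *v e3 = r3 *s e3" "r3 \<noteq> 0"
  proof -
    have "Gt *v e3 = (eb.crd (Gt *v e3) $ 3) *s e3"
      by (rule eb.eig3) (use Geig[OF eig(9)] m_nth in simp)
    then show ?thesis using that Gnz[OF eig(6)] by (metis vector_smult_lzero)
  qed
  have indelta: "proj_pt e \<in> delta \<phi> C1"
    if e0: "e \<noteq> 0" and er: "Gt *v e = r *s e" and r0: "r \<noteq> 0" and nnz: "\<not> nz (eb.crd e)" for e r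
    unfolding delta_def
  proof (intro CollectI conjI ballI)
    show "proj_pt e \<in> points" using e0 by (rule proj_points)
    show "proj_pt e \<notin> sub_points \<phi>"
    proof
      assume "proj_pt e \<in> sub_points \<phi>"
      then obtain v where v: "v \<noteq> 0" "proj_pt e = proj_pt (vmap \<phi> v)" by (auto simp: sub_points_def)
      then obtain c where c: "c \<noteq> 0" "e = c *s vmap \<phi> v" using proj_eq by metis
      have "eb.crd e = c *s eb.crd (vmap \<phi> v)" using c(2) eb.crd_smult by simp
      then have "nz (eb.crd e)" using ratnz[OF v(1)] c(1) by (simp add: nz_def)
      then show False using nnz by simp
    qed
    fix g' M assume g': "g' \<in> C1" and M: "M \<in> g'"
    obtain j where j: "g' = pcls (mpow G0 j)" using g' C1eq by auto
    obtain t where t: "t \<noteq> 0" "M = smat t (mpow G0 j)" using M j by (auto simp: pcls_mem)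
    have "mmap \<phi> M *v e = (\<phi> t * r ^ j) *s e"
      using mpow_eig[OF er, of j]
      by (simp add: t(2) mmap_smat[OF fe] mmap_mpow[OF fe] Gt_def smat_mv)
    moreover have "\<phi> t * r ^ j \<noteq> 0" using t(1) r0 fe_eq0[OF fe] by simp
    ultimately show "mact (mmap \<phi> M) (proj_pt e) = proj_pt e"
      by (simp add: mact_proj proj_smult)
  qed
  have crde: "\<not> nz (eb.crd e1)" "\<not> nz (eb.crd e2)" "\<not> nz (eb.crd e3)"
    unfolding nz_def eb.crd_e by (metis vector_3(2), metis vector_3(1), metis vector_3(1))
  have dl: "proj_pt e1 \<in> delta \<phi> C1" "proj_pt e2 \<in> delta \<phi> C1" "proj_pt e3 \<in> delta \<phi> C1"
    using indelta[OF eig(4) r1 crde(1)] indelta[OF eig(5) r2 crde(2)] indelta[OF eig(6) r3 crde(3)] .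
  define kt where "kt = qmap \<phi> k1"
  have kte: "qf kt e1 = 0" "qf kt e2 = 0" "qf kt e3 = 0"
    using assms(4) dl M1(2) proj_self unfolding circ_bundle_def kt_def by blast+
  define l :: "'b^3" where "l = vector [pol kt e2 e3, pol kt e1 e3, pol kt e1 e2]"
  have onK: "qf k1 v = 0 \<longleftrightarrow> dot3 l (vinv (eb.crd (vmap \<phi> v))) = 0" if v: "v \<noteq> 0" for v
  proof -
    define x where "x = eb.crd (vmap \<phi> v)"
    have nx: "nz x" using ratnz[OF v] by (simp add: x_def)
    have "\<phi> (qf k1 v) = qf kt (eb.lin x)" by (simp add: fe_qf[OF fe] kt_def x_def eb.lin_crd)
    also have "\<dots> = dot3 l (vinv x) * (x$1 * x$2 * x$3)"
      by (simp add: qf_lin0[OF kte] dot_vinv[OF nx] l_def)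
    finally have e: "\<phi> (qf k1 v) = dot3 l (vinv x) * (x$1 * x$2 * x$3)" .
    have p: "x$1 * x$2 * x$3 \<noteq> 0" using nx by (simp add: nz_def)
    show ?thesis unfolding x_def[symmetric] using e fe_eq0[OF fe, of "qf k1 v"] p by (metis mult_eq_0_iff)
  qed
  have l0: "l \<noteq> 0"
  proof
    assume "l = 0"
    then have "qf k1 v = 0" for v
      using onK[of v] by (cases "v = 0") (auto simp: dot3_def, cases k1, simp)
    then have "k1 = (0,0,0,0,0,0)" by (intro qf_determines) simp
    then show False using conic_rep(2)[OF Kc(1) M1(2)] by simp
  qed
  have cptsK: "proj_pt v \<in> cpts K \<longleftrightarrow> dot3 l (vinv (eb.crd (vmap \<phi> v))) = 0" if "v \<noteq> 0" for v
    using cpts_iff[OF Kc(1) M1(2) that] onK[OF that] by simp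
  have cptsK': "proj_pt v \<in> cpts K' \<longleftrightarrow> qf k1' v = 0" if "v \<noteq> 0" for v
    using cpts_iff[OF Kc(2) M1(3) that] .
  have cpts_pts: "cpts K \<subseteq> points" "cpts K' \<subseteq> points" by (auto simp: cpts_def)
  obtain a where a: "a \<noteq> 0" "A = proj_pt a" using assms(10) cpts_pts points_E by blast
  define b where "b = M1 *v a"
  have b0: "b \<noteq> 0" using det_nz_inj[OF dM1] a(1) by (auto simp: b_def)
  have B: "B = proj_pt b" using assms(11) pactg a(2) by (simp add: b_def)
  have BK: "B \<in> cpts K" "B \<in> cpts K'" using assms(9) by auto
  define al where "al = eb.crd (vmap \<phi> a)"
  have crdb: "eb.crd (vmap \<phi> b) = m * al" by (simp add: b_def al_def crdN)
  have nal: "nz al" using ratnz[OF a(1)] by (simp add: al_def)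
  have hA: "dot3 l (vinv al) = 0" using cptsK[OF a(1)] assms(10) a(2) by (simp add: al_def)
  have hB: "dot3 l (vinv (m * al)) = 0" using cptsK[OF b0] BK(1) B crdb by simp
  have detc: "\<phi> (det3 x y z) = det3 (eb.crd (vmap \<phi> x)) (eb.crd (vmap \<phi> y)) (eb.crd (vmap \<phi> z)) * det3 e1 e2 e3"
    for x y z
    by (simp add: fe_det3[OF fe] det3_lin[symmetric] eb.lin_crd)
  have detz: "det3 x y z = 0 \<longleftrightarrow> det3 (eb.crd (vmap \<phi> x)) (eb.crd (vmap \<phi> y)) (eb.crd (vmap \<phi> z)) = 0"
    for x y z
    using detc[of x y z] D0 fe_eq0[OF fe] by (metis mult_eq_0_iff)
  have part1: "\<forall>P \<in> cpts K - {A, B}. B \<in> pline P (pact g P)"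
  proof
    fix P assume "P \<in> cpts K - {A, B}"
    then have PK: "P \<in> cpts K" by simp
    obtain p where p: "p \<noteq> 0" "P = proj_pt p" using PK cpts_pts points_E by blast
    define pp where "pp = eb.crd (vmap \<phi> p)"
    have hP: "dot3 l (vinv pp) = 0" using cptsK[OF p(1)] PK p(2) by (simp add: pp_def)
    have npp: "nz pp" using ratnz[OF p(1)] by (simp add: pp_def)
    have "det3 pp (m * pp) (m * al) = 0" by (rule key1[OF l0 npp nal mnz hP hA hB])
    then have "det3 p (M1 *v p) b = 0" using detz[of p "M1 *v p" b] crdN[of p] crdb by (simp add: pp_def)
    then show "B \<in> pline P (pact g P)" using pline_iff[OF b0] B p(2) pactg by simp
  qed
  have bpl: "det3 b y b = 0" for y by (simp add: det3_def algebra_simps)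
  have part2: "tangent_at (pline B (pact g B)) K B"
    unfolding tangent_at_def
  proof (intro conjI)
    show "B \<in> cpts K" by (rule BK(1))
    show "pline B (pact g B) \<inter> cpts K = {B}"
    proof (rule set_eqI, rule iffI)
      fix X assume X: "X \<in> pline B (pact g B) \<inter> cpts K"
      obtain x where x: "x \<noteq> 0" "X = proj_pt x" using X cpts_pts points_E by blast
      have dx: "det3 b (M1 *v b) x = 0" using X x pline_iff[OF x(1)] B pactg by simp
      define xi where "xi = eb.crd (vmap \<phi> x)"
      have col: "det3 (m * al) (m * (m * al)) xi = 0"
        using detz[of b "M1 *v b" x] dx crdN[of b] crdb by (simp add: xi_def)
      have hX: "dot3 l (vinv xi) = 0" using cptsK[OF x(1)] X x(2) by (simp add: xi_def)
      have nxi: "nz xi" using ratnz[OF x(1)] by (simp add: xi_def)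
      obtain t where t: "xi = t *s (m * al)"
        using key2[OF l0 nxi nal mnz eb.md hX hA hB col] by blast
      then have "eb.crd (vmap \<phi> x) = eb.crd (t *s vmap \<phi> b)"
        using crdb eb.crd_smult by (simp add: xi_def)
      then have "vmap \<phi> x = t *s vmap \<phi> b" by (rule eb.crd_inj)
      then have "proj_pt x = proj_pt b" by (rule proj_ratio[OF fe x(1) b0])
      then show "X \<in> {B}" using x B by simp
    next
      fix X assume "X \<in> {B}"
      then show "X \<in> pline B (pact g B) \<inter> cpts K"
        using BK(1) pline_iff[OF b0, of b "M1 *v b"] bpl B pactg by simp
    qed
  qed
  have part3: "\<forall>R \<in> points. pact g R = B \<longrightarrow> tangent_at (pline B R) K' B"
  proof (intro ballI impI)
    fix R assume R: "R \<in> points" "pact g R = B"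
    obtain r where r: "r \<noteq> 0" "R = proj_pt r" using R(1) points_E by blast
    have "proj_pt (M1 *v r) = proj_pt b" using R(2) r(2) pactg B by simp
    then obtain c where c: "c \<noteq> 0" "M1 *v r = c *s b" using proj_eq by metis
    have "M1 *v (r - c *s a) = 0" using c(2) by (simp add: b_def matrix_vector_mult_diff_distrib mv_smult)
    then have "r - c *s a = 0" using det_nz_inj[OF dM1] by blast
    then have "r = c *s a" by simp
    then have RA: "R = A" using r(2) a(2) proj_smult[OF c(1)] by simp
    show "tangent_at (pline B R) K' B"
      unfolding tangent_at_def RA
    proof (intro conjI)
      show "B \<in> cpts K'" by (rule BK(2))
      show "pline B A \<inter> cpts K' = {B}"
      proof (rule set_eqI, rule iffI)
        fix X assume X: "X \<in> pline B A \<inter> cpts K'"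
        obtain x where x: "x \<noteq> 0" "X = proj_pt x" using X cpts_pts points_E by blast
        have dx: "det3 b a x = 0" using X x pline_iff[OF x(1)] B a(2) by simp
        have "invertible M1" using dM1 invertible_det_nz by blast
        then have "bij ((*v) M1)" by (simp only: invertible_eq_bij)
        then have "surj ((*v) M1)" by (rule bij_is_surj)
        from surjD[OF this, of x] obtain x' where x': "M1 *v x' = x" by metis
        have x'0: "x' \<noteq> 0" using x' x(1) mv_zero by auto
        have "qf k1' x = 0" using cptsK'[OF x(1)] X x(2) by simp
        then have "qf k1 x' = 0" using M1(4)[of x'] x' by simp
        then have hX: "dot3 l (vinv (eb.crd (vmap \<phi> x'))) = 0" using onK[OF x'0] by simp
        define xi where "xi = eb.crd (vmap \<phi> x')"
        have col: "det3 (m * al) al (m * xi) = 0"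
          using detz[of b a x] dx crdb x' crdN[of x'] by (simp add: xi_def al_def)
        have nxi: "nz xi" using ratnz[OF x'0] by (simp add: xi_def)
        obtain t where t: "xi = t *s al"
          using key3[OF l0 nxi nal mnz eb.md _ hA hB col] hX by (auto simp: xi_def)
        then have "eb.crd (vmap \<phi> x') = eb.crd (t *s vmap \<phi> a)"
          using eb.crd_smult by (simp add: xi_def al_def)
        then have "vmap \<phi> x' = t *s vmap \<phi> a" by (rule eb.crd_inj)
        then have "N *v vmap \<phi> x' = t *s (N *v vmap \<phi> a)" by (simp add: mv_smult)
        moreover have "vmap \<phi> x = N *v vmap \<phi> x'" using x' Nmv[of x'] by simp
        moreover have "vmap \<phi> b = N *v vmap \<phi> a" using Nmv[of a] by (simp add: b_def)
        ultimately have "vmap \<phi> x = t *s vmap \<phi> b" by simp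
        then have "proj_pt x = proj_pt b" by (rule proj_ratio[OF fe x(1) b0])
        then show "X \<in> {B}" using x B by simp
      next
        fix X assume "X \<in> {B}"
        then show "X \<in> pline B A \<inter> cpts K'"
          using BK(2) pline_iff[OF b0, of b a] bpl B a(2) by simp
      qed
    qed
  qed
  show ?thesis using part1 part2 part3 by blast
qed

end
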